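(* Let $\beta\in(1,2]$ and let $\mu$ be a real-valued function in $C^\infty(\mathbb{R}^n\setminus\{0\})$, homogeneous of degree $\beta$ (i.e. $\mu(\lambda\xi)=\lambda^\beta\mu(\xi)$ for $\lambda>0$, $\xi\ne0$), with $\mu(\xi)\neq0$ for all $\xi\ne0$. Then: (i) for all $0<p,q\le\infty$ there is $\epsilon>0$ such that $(1-\rho_0)\partial^\gamma\mu\in W^{\infty,\infty}_{n/(\dot p\wedge\dot q)+\epsilon}$ for all $|\gamma|=2$, where $\rho_0\in C_c^\infty$ is supported in $B(0,1/2)$ and equals $1$ on $B(0,1/4)$; and (ii) there exists $\kappa_0\in\mathbb S^{n-1}$ at which the Hessian matrix of $\mu$ is nondegenerate (in fact definite). Consequently $\mu$ satisfies all hypotheses of Theorem 1.5 (the necessity result stated there).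
   Context: For a fixed nonzero Schwartz window $\phi$, $V_\phi f(x,\xi)=\int f(y)\overline{\phi(y-x)}e^{-2\pi i y\cdot\xi}dy$; $\langle x\rangle=(1+|x|^2)^{1/2}$. The Wiener amalgam space $W^{p,q}_s$ consists of $f\in\mathcal S'$ with $\|f\|_{W^{p,q}_s}=\big\|\,\|V_\phi f(x,\xi)\langle\xi\rangle^s\|_{L^q_\xi}\big\|_{L^p_x}<\infty$. $\dot p=\min\{1,p\}$, $\dot q=\min\{1,q\}$, $\dot p\wedge\dot q=\min\{\dot p,\dot q\}$. The hypotheses of Theorem 1.5 are: $\mu$ real-valued $C^2(\mathbb{R}^n\setminus\{0\})$, $(1-\rho_0)\partial^\gamma\mu\in W^{\infty,\infty}_{n/(\dot p\wedge\dot q)+\epsilon}$ ($|\gamma|=2$), nonzero Hessian determinant at some $\kappa_0\in\mathbb S^{n-1}$, and $\mu(\lambda\xi)=\lambda^\beta\mu(\xi)$ for $\lambda\ge1$, $\xi\in B(\kappa_0,r_0)\cap\mathbb S^{n-1}$. *)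

theory Defs
  imports "HOL-Analysis.Analysis"
begin

text \<open>Partial derivative in coordinate direction i, and iterated partial derivatives.
  The list [i1,...,ik] denotes the operator d_i1 d_i2 ... d_ik.\<close>
definition dpart :: "'n::finite \<Rightarrow> (real^'n \<Rightarrow> 'a::real_normed_vector) \<Rightarrow> real^'n \<Rightarrow> 'a" where
  "dpart i f x = frechet_derivative f (at x) (axis i 1)"

fun dlist :: "'n::finite list \<Rightarrow> (real^'n \<Rightarrow> 'a::real_normed_vector) \<Rightarrow> real^'n \<Rightarrow> 'a" where
  "dlist [] f = f"
| "dlist (i # is) f = dpart i (dlist is f)"

definition smooth_on :: "(real^'n::finite) set \<Rightarrow> (real^'n \<Rightarrow> 'a::real_normed_vector) \<Rightarrow> bool" where
  "smooth_on U f \<longleftrightarrow> (\<forall>is. \<forall>x\<in>U. dlist is f differentiable (at x))"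

definition schwartz :: "(real^'n::finite \<Rightarrow> complex) \<Rightarrow> bool" where
  "schwartz \<phi> \<longleftrightarrow> smooth_on UNIV \<phi> \<and>
     (\<forall>is (k::nat). \<exists>C. \<forall>x. (1 + norm x) ^ k * norm (dlist is \<phi> x) \<le> C)"

definition jbr :: "real^'n::finite \<Rightarrow> real" where
  "jbr x = sqrt (1 + (norm x)\<^sup>2)"

definition STFT :: "(real^'n::finite \<Rightarrow> complex) \<Rightarrow> (real^'n \<Rightarrow> complex) \<Rightarrow> real^'n \<Rightarrow> real^'n \<Rightarrow> complex" where
  "STFT \<phi> f x \<xi> = (LINT y|lborel. f y * cnj (\<phi> (y - x)) * cis (- 2 * pi * (y \<bullet> \<xi>)))"

definition in_W_inf_inf :: "(real^'n::finite \<Rightarrow> complex) \<Rightarrow> real \<Rightarrow> (real^'n \<Rightarrow> complex) \<Rightarrow> bool" where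
  "in_W_inf_inf \<phi> s f \<longleftrightarrow>
     (\<forall>x \<xi>. integrable lborel (\<lambda>y. f y * cnj (\<phi> (y - x)) * cis (- 2 * pi * (y \<bullet> \<xi>)))) \<and>
     (\<exists>C. \<forall>x \<xi>. norm (STFT \<phi> f x \<xi>) * jbr \<xi> powr s \<le> C)"

text \<open>p-dot wedge q-dot = min{1,p,q} for p,q in (0,infty].\<close>
definition dotmin :: "ereal \<Rightarrow> ereal \<Rightarrow> real" where
  "dotmin p q = real_of_ereal (min 1 (min p q))"

definition hessian :: "(real^'n::finite \<Rightarrow> real) \<Rightarrow> real^'n \<Rightarrow> real^'n^'n" where
  "hessian \<mu> x = (\<chi> i j. dlist [i, j] \<mu> x)"

end

theory Submission
  imports Defs "HOL-Probability.Sinc_Integral"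
begin

lemma fd_local:
  assumes "open U" "z \<in> U" "\<And>y. y \<in> U \<Longrightarrow> F y = G y"
  shows "frechet_derivative F (at z) = frechet_derivative G (at z)"
proof -
  have "(F has_derivative D) (at z) \<longleftrightarrow> (G has_derivative D) (at z)" for D
    using assms has_derivative_transform_within_open[of F D z UNIV U G]
      has_derivative_transform_within_open[of G D z UNIV U F] by auto
  then show ?thesis unfolding frechet_derivative_def by simp
qed

lemma diff_local:
  assumes "open U" "z \<in> U" "\<And>y. y \<in> U \<Longrightarrow> F y = G y" "G differentiable (at z)"
  shows "F differentiable (at z)"
  using assms has_derivative_transform_within_open[of G _ z UNIV U F]
  unfolding differentiable_def by fastforce

lemma dlist_local:
  assumes "open U" "\<And>y. y \<in> U \<Longrightarrow> F y = G y"
  shows "z \<in> U \<Longrightarrow> dlist is F z = dlist is G z"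
proof (induction "is" arbitrary: z)
  case Nil then show ?case using assms by simp
next
  case (Cons i "is")
  then show ?case unfolding dlist.simps dpart_def
    using fd_local[OF assms(1) Cons.prems, of "dlist is F" "dlist is G"] Cons.IH by simp
qed

lemma dlist_append: "dlist (a @ b) F = dlist a (dlist b F)"
  by (induction a) auto

lemma smooth_on_local:
  assumes "open U" "\<And>y. y \<in> U \<Longrightarrow> F y = G y" "smooth_on U G"
  shows "smooth_on U F"
  unfolding smooth_on_def
proof (intro allI ballI)
  fix "is" z assume z: "z \<in> U"
  show "dlist is F differentiable (at z)"
    by (rule diff_local[OF assms(1) z, of _ "dlist is G"])
       (use dlist_local[OF assms(1,2)] assms(3) z in \<open>auto simp: smooth_on_def\<close>)
qed

lemma smooth_on_subset: "smooth_on U F \<Longrightarrow> V \<subseteq> U \<Longrightarrow> smooth_on V F"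
  unfolding smooth_on_def by auto

lemma dpart_has:
  assumes "F differentiable (at z)"
  shows "(F has_derivative frechet_derivative F (at z)) (at z)"
  using assms frechet_derivative_works by blast

lemma dpart_linear:
  fixes L :: "'a::real_normed_vector \<Rightarrow> 'b::real_normed_vector"
  assumes L: "bounded_linear L" and d: "F differentiable (at z)"
  shows "dpart i (\<lambda>y. L (F y)) z = L (dpart i F z)"
    and "(\<lambda>y. L (F y)) differentiable (at z)"
proof -
  have "((\<lambda>y. L (F y)) has_derivative (\<lambda>h. L (frechet_derivative F (at z) h))) (at z)"
    using bounded_linear.has_derivative[OF L dpart_has[OF d]] .
  then show "dpart i (\<lambda>y. L (F y)) z = L (dpart i F z)"
       "(\<lambda>y. L (F y)) differentiable (at z)"
    unfolding dpart_def using frechet_derivative_at differentiableI by metis+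
qed

lemma dlist_linear:
  fixes L :: "'a::real_normed_vector \<Rightarrow> 'b::real_normed_vector"
  assumes L: "bounded_linear L" and U: "open U" and sm: "smooth_on U F"
  shows "z \<in> U \<Longrightarrow> dlist is (\<lambda>y. L (F y)) z = L (dlist is F z)"
proof (induction "is" arbitrary: z)
  case Nil then show ?case by simp
next
  case (Cons i "is")
  have e: "\<And>y. y \<in> U \<Longrightarrow> dlist is (\<lambda>y. L (F y)) y = L (dlist is F y)"
    using Cons.IH .
  have "dlist (i # is) (\<lambda>y. L (F y)) z = dpart i (\<lambda>y. L (dlist is F y)) z"
    unfolding dlist.simps dpart_def using fd_local[OF U Cons.prems e] by simp
  also have "\<dots> = L (dlist (i # is) F z)"
    using dpart_linear(1)[OF L, of "dlist is F" z i] sm Cons.prems by (simp add: smooth_on_def)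
  finally show ?case .
qed

lemma smooth_linear:
  fixes L :: "'a::real_normed_vector \<Rightarrow> 'b::real_normed_vector"
  assumes L: "bounded_linear L" and U: "open U" and sm: "smooth_on U F"
  shows "smooth_on U (\<lambda>y. L (F y))"
  unfolding smooth_on_def
proof (intro allI ballI)
  fix "is" z assume z: "z \<in> U"
  have d: "(\<lambda>y. L (dlist is F y)) differentiable (at z)"
    using dpart_linear(2)[OF L] sm z by (auto simp: smooth_on_def)
  show "dlist is (\<lambda>y. L (F y)) differentiable (at z)"
    by (rule diff_local[OF U z _ d]) (rule dlist_linear[OF L U sm])
qed

lemma dpart_sum_list:
  assumes "\<And>q. q \<in> set L \<Longrightarrow> h q differentiable (at z)"
  shows "((\<lambda>y. \<Sum>q\<leftarrow>L. h q y) has_derivative (\<lambda>v. \<Sum>q\<leftarrow>L. frechet_derivative (h q) (at z) v)) (at z)"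
  using assms
proof (induction L)
  case Nil then show ?case by (simp add: has_derivative_const)
next
  case (Cons a L)
  show ?case using has_derivative_add[OF dpart_has[of "h a" z] Cons.IH] Cons.prems by simp
qed

fun splits :: "'n list \<Rightarrow> ('n list \<times> 'n list) list" where
  "splits [] = [([],[])]"
| "splits (i # is) = map (\<lambda>(a,b). (i # a, b)) (splits is) @ map (\<lambda>(a,b). (a, i # b)) (splits is)"

lemma sum_prod_has_derivative:
  fixes F G :: "real^'n::finite \<Rightarrow> 'a::real_normed_algebra"
  assumes "\<And>a b. (a,b) \<in> set L \<Longrightarrow> dlist a F differentiable (at z) \<and> dlist b G differentiable (at z)"
  shows "((\<lambda>y. \<Sum>(a,b)\<leftarrow>L. dlist a F y * dlist b G y) has_derivative
     (\<lambda>v. \<Sum>(a,b)\<leftarrow>L. dlist a F z * frechet_derivative (dlist b G) (at z) v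
                      + frechet_derivative (dlist a F) (at z) v * dlist b G z)) (at z)"
  using assms
proof (induction L)
  case Nil then show ?case by simp
next
  case (Cons p L)
  obtain a b where p: "p = (a,b)" by force
  have "((\<lambda>y. dlist a F y * dlist b G y) has_derivative
     (\<lambda>v. dlist a F z * frechet_derivative (dlist b G) (at z) v
                      + frechet_derivative (dlist a F) (at z) v * dlist b G z)) (at z)"
    by (rule has_derivative_mult) (use dpart_has Cons.prems p in auto)
  moreover have "((\<lambda>y. \<Sum>(a,b)\<leftarrow>L. dlist a F y * dlist b G y) has_derivative
     (\<lambda>v. \<Sum>(a,b)\<leftarrow>L. dlist a F z * frechet_derivative (dlist b G) (at z) v
                      + frechet_derivative (dlist a F) (at z) v * dlist b G z)) (at z)"
    by (rule Cons.IH) (use Cons.prems in auto)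
  ultimately show ?case using p by (simp add: has_derivative_add)
qed

lemma leibniz:
  fixes F G :: "real^'n::finite \<Rightarrow> 'a::real_normed_algebra"
  assumes U: "open U" and sF: "smooth_on U F" and sG: "smooth_on U G"
  shows "z \<in> U \<Longrightarrow> dlist is (\<lambda>y. F y * G y) z = (\<Sum>(a,b)\<leftarrow>splits is. dlist a F z * dlist b G z)"
proof (induction "is" arbitrary: z)
  case Nil then show ?case by simp
next
  case (Cons i "is")
  have e: "\<And>y. y \<in> U \<Longrightarrow> dlist is (\<lambda>y. F y * G y) y = (\<Sum>(a,b)\<leftarrow>splits is. dlist a F y * dlist b G y)"
    using Cons.IH .
  have "dlist (i # is) (\<lambda>y. F y * G y) z
      = frechet_derivative (\<lambda>y. \<Sum>(a,b)\<leftarrow>splits is. dlist a F y * dlist b G y) (at z) (axis i 1)"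
    unfolding dlist.simps dpart_def using fd_local[OF U Cons.prems e] by simp
  also have "\<dots> = (\<Sum>(a,b)\<leftarrow>splits is. dlist a F z * dlist (i # b) G z + dlist (i # a) F z * dlist b G z)"
    by (subst frechet_derivative_at[OF sum_prod_has_derivative, symmetric])
       (use sF sG Cons.prems in \<open>auto simp: smooth_on_def dpart_def\<close>)
  also have "\<dots> = (\<Sum>(a,b)\<leftarrow>splits (i # is). dlist a F z * dlist b G z)"
    by (simp add: sum_list_addf case_prod_unfold o_def add.commute)
  finally show ?case .
qed

lemma smooth_mult:
  fixes F G :: "real^'n::finite \<Rightarrow> 'a::real_normed_algebra"
  assumes U: "open U" and sF: "smooth_on U F" and sG: "smooth_on U G"
  shows "smooth_on U (\<lambda>y. F y * G y)"
  unfolding smooth_on_def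
proof (intro allI ballI)
  fix "is" z assume z: "z \<in> U"
  have d: "(\<lambda>y. \<Sum>(a,b)\<leftarrow>splits is. dlist a F y * dlist b G y) differentiable (at z)"
    using sum_prod_has_derivative[of "splits is" F z G] sF sG z
    by (auto simp: smooth_on_def differentiable_def)
  show "dlist is (\<lambda>y. F y * G y) differentiable (at z)"
    by (rule diff_local[OF U z _ d]) (rule leibniz[OF U sF sG])
qed

lemma affine_has_derivative:
  fixes F :: "real^'n::finite \<Rightarrow> 'a::real_normed_vector"
  assumes d: "F differentiable (at (c *\<^sub>R z + w))"
  shows "((\<lambda>y. s *\<^sub>R F (c *\<^sub>R y + w)) has_derivative
          (\<lambda>h. s *\<^sub>R frechet_derivative F (at (c *\<^sub>R z + w)) (c *\<^sub>R h))) (at z)"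
proof -
  have A: "((\<lambda>y. c *\<^sub>R y + w) has_derivative (\<lambda>h. c *\<^sub>R h)) (at z)"
    by (auto intro!: derivative_eq_intros)
  have "((\<lambda>y. F (c *\<^sub>R y + w)) has_derivative
          (\<lambda>h. frechet_derivative F (at (c *\<^sub>R z + w)) (c *\<^sub>R h))) (at z)"
    using has_derivative_compose[OF A dpart_has[OF d]] .
  from has_derivative_scaleR_right[OF this, of s] show ?thesis .
qed

lemma dlist_affine:
  fixes F :: "real^'n::finite \<Rightarrow> 'a::real_normed_vector"
  assumes U: "open U" and V: "open V" and sm: "smooth_on U F"
    and AV: "\<And>y. y \<in> V \<Longrightarrow> c *\<^sub>R y + w \<in> U"
  shows "z \<in> V \<Longrightarrow> dlist is (\<lambda>y. F (c *\<^sub>R y + w)) z = c ^ length is *\<^sub>R dlist is F (c *\<^sub>R z + w)"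
proof (induction "is" arbitrary: z)
  case Nil then show ?case by simp
next
  case (Cons i "is")
  have e: "\<And>y. y \<in> V \<Longrightarrow> dlist is (\<lambda>y. F (c *\<^sub>R y + w)) y = c ^ length is *\<^sub>R dlist is F (c *\<^sub>R y + w)"
    using Cons.IH .
  have d: "dlist is F differentiable (at (c *\<^sub>R z + w))"
    using sm AV Cons.prems by (auto simp: smooth_on_def)
  have lin: "linear (frechet_derivative (dlist is F) (at (c *\<^sub>R z + w)))"
    using has_derivative_linear[OF dpart_has[OF d]] .
  have "dlist (i # is) (\<lambda>y. F (c *\<^sub>R y + w)) z
      = frechet_derivative (\<lambda>y. c ^ length is *\<^sub>R dlist is F (c *\<^sub>R y + w)) (at z) (axis i 1)"
    unfolding dlist.simps dpart_def using fd_local[OF V Cons.prems e] by simp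
  also have "\<dots> = c ^ length is *\<^sub>R frechet_derivative (dlist is F) (at (c *\<^sub>R z + w)) (c *\<^sub>R axis i 1)"
    by (subst frechet_derivative_at[OF affine_has_derivative[OF d], symmetric]) simp
  also have "\<dots> = c ^ length (i # is) *\<^sub>R dlist (i # is) F (c *\<^sub>R z + w)"
    using linear.scaleR[OF lin] by (simp add: dpart_def mult.commute)
  finally show ?case .
qed

lemma smooth_affine:
  fixes F :: "real^'n::finite \<Rightarrow> 'a::real_normed_vector"
  assumes U: "open U" and V: "open V" and sm: "smooth_on U F"
    and AV: "\<And>y. y \<in> V \<Longrightarrow> c *\<^sub>R y + w \<in> U"
  shows "smooth_on V (\<lambda>y. F (c *\<^sub>R y + w))"
  unfolding smooth_on_def
proof (intro allI ballI)
  fix "is" z assume z: "z \<in> V"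
  have d: "(\<lambda>y. c ^ length is *\<^sub>R dlist is F (c *\<^sub>R y + w)) differentiable (at z)"
    using affine_has_derivative[of "dlist is F" c z w "c ^ length is"] sm AV z
    by (auto simp: smooth_on_def differentiable_def)
  show "dlist is (\<lambda>y. F (c *\<^sub>R y + w)) differentiable (at z)"
    by (rule diff_local[OF V z _ d]) (rule dlist_affine[OF U V sm AV])
qed

lemma dlist_translate:
  fixes F :: "real^'n::finite \<Rightarrow> 'a::real_normed_vector"
  assumes sm: "smooth_on UNIV F"
  shows "dlist is (\<lambda>y. F (y - x)) z = dlist is F (z - x)"
    and "smooth_on UNIV (\<lambda>y. F (y - x))"
  using dlist_affine[OF open_UNIV open_UNIV sm, of 1 "-x" z "is"]
    smooth_affine[OF open_UNIV open_UNIV sm, of 1 "-x"] by auto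

lemma dlist_homog:
  fixes \<mu> :: "real^'n::finite \<Rightarrow> real"
  assumes smooth: "smooth_on (- {0}) \<mu>"
    and homog: "\<And>t \<xi>. t > 0 \<Longrightarrow> \<xi> \<noteq> 0 \<Longrightarrow> \<mu> (t *\<^sub>R \<xi>) = t powr \<beta> * \<mu> \<xi>"
    and t: "t > 0" and z: "z \<noteq> 0"
  shows "dlist is \<mu> (t *\<^sub>R z) = t powr (\<beta> - length is) * dlist is \<mu> z"
proof -
  have U: "open (- {0::real^'n})" by auto
  have AV: "\<And>y. y \<in> - {0} \<Longrightarrow> t *\<^sub>R y + 0 \<in> - {0::real^'n}" using t by auto
  have "t ^ length is * dlist is \<mu> (t *\<^sub>R z) = dlist is (\<lambda>y. \<mu> (t *\<^sub>R y + 0)) z"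
    using dlist_affine[OF U U smooth AV, of z "is"] z by simp
  also have "\<dots> = dlist is (\<lambda>y. (t powr \<beta>) * \<mu> y) z"
    by (rule dlist_local[OF U]) (use homog t z in auto)
  also have "\<dots> = t powr \<beta> * dlist is \<mu> z"
    using dlist_linear[OF bounded_linear_mult_right U smooth, of z "is"] z by simp
  finally have "t ^ length is * dlist is \<mu> (t *\<^sub>R z) = t powr \<beta> * dlist is \<mu> z" .
  moreover have "t powr (\<beta> - length is) = t powr \<beta> / t ^ length is"
    using t by (simp add: powr_diff powr_realpow)
  ultimately have "t ^ length is * dlist is \<mu> (t *\<^sub>R z) = t ^ length is * (t powr (\<beta> - length is) * dlist is \<mu> z)"
    using t by (simp add: field_simps)
  then show ?thesis using t by simp
qed

lemma smooth_cont:
  assumes "smooth_on U F" "open U"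
  shows "continuous_on U (dlist is F)"
  using assms by (auto simp: smooth_on_def intro!: continuous_at_imp_continuous_on differentiable_imp_continuous_within)

lemma dlist_mu_bound:
  fixes \<mu> :: "real^'n::finite \<Rightarrow> real"
  assumes smooth: "smooth_on (- {0}) \<mu>"
    and homog: "\<And>t \<xi>. t > 0 \<Longrightarrow> \<xi> \<noteq> 0 \<Longrightarrow> \<mu> (t *\<^sub>R \<xi>) = t powr \<beta> * \<mu> \<xi>"
    and len: "\<beta> \<le> length is"
  shows "\<exists>B. \<forall>z. norm z \<ge> 1/4 \<longrightarrow> \<bar>dlist is \<mu> z\<bar> \<le> B"
proof -
  have "continuous_on (sphere 0 1) (dlist is \<mu>)"
    using smooth_cont[OF smooth] by (rule continuous_on_subset) auto
  then have "bounded (dlist is \<mu> ` sphere 0 1)"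
    by (intro compact_imp_bounded compact_continuous_image) auto
  then obtain B0 where B0: "\<And>w. norm w = 1 \<Longrightarrow> \<bar>dlist is \<mu> w\<bar> \<le> B0"
    unfolding bounded_iff by fastforce
  have "\<bar>dlist is \<mu> z\<bar> \<le> (1/4) powr (\<beta> - length is) * B0" if z: "norm z \<ge> 1/4" for z
  proof -
    let ?t = "norm z" and ?w = "z /\<^sub>R norm z"
    have t: "?t > 0" using z by linarith
    have zz: "z = ?t *\<^sub>R ?w" using t by simp
    have w: "?w \<noteq> 0" "norm ?w = 1" using t by auto
    have "dlist is \<mu> z = ?t powr (\<beta> - length is) * dlist is \<mu> ?w"
      using dlist_homog[OF smooth homog t w(1), of "is"] zz by simp
    also have "\<bar>\<dots>\<bar> \<le> (1/4) powr (\<beta> - length is) * B0"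
      using B0[OF w(2)] powr_mono2'[of "\<beta> - length is" "1/4" ?t] len z
      by (auto simp: abs_mult intro!: mult_mono)
    finally show ?thesis .
  qed
  then show ?thesis by blast
qed

lemma dlist_const: "dlist c (\<lambda>_::real^'n::finite. K) z = (if c = [] then K else (0::'a::real_normed_vector))"
proof (induction c arbitrary: z)
  case Nil then show ?case by simp
next
  case (Cons i c)
  have "dlist c (\<lambda>_::real^'n. K) = (\<lambda>_. if c = [] then K else 0)" using Cons.IH by auto
  then show ?case
    by (simp add: dpart_def frechet_derivative_at[OF has_derivative_const, symmetric])
qed

lemma smooth_const: "smooth_on U (\<lambda>_::real^'n::finite. (K::'a::real_normed_vector))"
  unfolding smooth_on_def
proof (intro allI ballI)
  fix c z
  have "dlist c (\<lambda>_::real^'n. K) = (\<lambda>_. if c = [] then K else 0)" by (rule ext) (rule dlist_const)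
  then show "dlist c (\<lambda>_::real^'n. K) differentiable (at z)" by simp
qed

lemma dlist_minus_const:
  fixes G :: "real^'n::finite \<Rightarrow> 'a::real_normed_vector"
  assumes sm: "smooth_on UNIV G"
  shows "c \<noteq> [] \<Longrightarrow> dlist c (\<lambda>x. K - G x) = dlist c (\<lambda>x. - G x)"
proof (induction c)
  case Nil then show ?case by simp
next
  case (Cons i c)
  show ?case
  proof (cases "c = []")
    case True
    have "frechet_derivative (\<lambda>x. K - G x) (at z) = frechet_derivative (\<lambda>x. - G x) (at z)" for z
    proof -
      have "G differentiable (at z)" using sm unfolding smooth_on_def by (metis UNIV_I dlist.simps(1))
      then have d: "(G has_derivative frechet_derivative G (at z)) (at z)"
        by (rule dpart_has)
      show ?thesis
        using frechet_derivative_at[OF has_derivative_diff[OF has_derivative_const[of K] d]]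
          frechet_derivative_at[OF has_derivative_minus[OF d]] by simp
    qed
    then show ?thesis using True by (simp add: dpart_def fun_eq_iff)
  next
    case False
    then show ?thesis using Cons.IH by simp
  qed
qed

lemma smooth_minus_const:
  fixes G :: "real^'n::finite \<Rightarrow> 'a::real_normed_vector"
  assumes sm: "smooth_on UNIV G"
  shows "smooth_on UNIV (\<lambda>x. K - G x)"
  unfolding smooth_on_def
proof (intro allI ballI)
  fix c z
  have s2: "smooth_on UNIV (\<lambda>x. - G x)"
    using smooth_linear[OF bounded_linear_minus[OF bounded_linear_ident] open_UNIV sm] by simp
  show "dlist c (\<lambda>x. K - G x) differentiable (at z)"
  proof (cases "c = []")
    case True
    have "G differentiable (at z)" using sm unfolding smooth_on_def by (metis UNIV_I dlist.simps(1))
    then show ?thesis using True by (auto intro!: derivative_intros)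
  next
    case False
    then show ?thesis using dlist_minus_const[OF sm False] s2 by (auto simp: smooth_on_def)
  qed
qed

lemma dlist_bounded_compact_support:
  fixes G :: "real^'n::finite \<Rightarrow> 'a::real_normed_vector"
  assumes sm: "smooth_on UNIV G" and r: "r \<ge> 0"
    and out: "\<And>z. norm z > r \<Longrightarrow> dlist c G z = K"
  shows "\<exists>R. \<forall>z. norm (dlist c G z) \<le> R"
proof -
  have "continuous_on (cball 0 r) (dlist c G)"
    using smooth_cont[OF sm open_UNIV] by (rule continuous_on_subset) auto
  then have "bounded (dlist c G ` cball 0 r)"
    by (intro compact_imp_bounded compact_continuous_image) auto
  then obtain B0 where B0: "\<And>w. norm w \<le> r \<Longrightarrow> norm (dlist c G w) \<le> B0"
    unfolding bounded_iff by fastforce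
  have "norm (dlist c G z) \<le> max B0 (norm K)" for z
    using B0[of z] out[of z] by (cases "norm z \<le> r") auto
  then show ?thesis by blast
qed

lemma norm_sum_list_le: "norm (\<Sum>q\<leftarrow>L. (h q :: 'a::real_normed_vector)) \<le> (\<Sum>q\<leftarrow>L. norm (h q))"
  by (induction L) (auto intro: order_trans[OF norm_triangle_ineq])

lemma sum_list_mono': "(\<And>q. q \<in> set L \<Longrightarrow> (h q::real) \<le> g q) \<Longrightarrow> (\<Sum>q\<leftarrow>L. h q) \<le> (\<Sum>q\<leftarrow>L. g q)"
  by (induction L) (auto intro: add_mono)

lemma splits_length: "(a, b) \<in> set (splits is) \<Longrightarrow> length a + length b = length is"
  by (induction "is" arbitrary: a b) auto

lemma f_props:
  fixes \<mu> :: "real^'n::finite \<Rightarrow> real" and \<rho>0 :: "real^'n \<Rightarrow> real"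
  assumes smooth: "smooth_on (- {0}) \<mu>"
    and homog: "\<And>t \<xi>. t > 0 \<Longrightarrow> \<xi> \<noteq> 0 \<Longrightarrow> \<mu> (t *\<^sub>R \<xi>) = t powr \<beta> * \<mu> \<xi>"
    and beta2: "\<beta> \<le> 2"
    and rho_smooth: "smooth_on UNIV \<rho>0"
    and rho_supp: "closure {x. \<rho>0 x \<noteq> 0} \<subseteq> ball 0 (1/2)"
    and rho_one: "\<And>x. x \<in> ball 0 (1/4) \<Longrightarrow> \<rho>0 x = 1"
  shows "smooth_on UNIV (\<lambda>x. (1 - \<rho>0 x) * dlist [i, j] \<mu> x)"
    and "\<exists>A. \<forall>z. \<bar>dlist a (\<lambda>x. (1 - \<rho>0 x) * dlist [i, j] \<mu> x) z\<bar> \<le> A"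
proof -
  define f where "f = (\<lambda>x. (1 - \<rho>0 x) * dlist [i, j] \<mu> x)"
  define D where "D = dlist [i, j] \<mu>"
  have U: "open (- {0::real^'n})" by auto
  have R1s: "smooth_on UNIV (\<lambda>x. 1 - \<rho>0 x)" by (rule smooth_minus_const[OF rho_smooth])
  have Ds: "smooth_on (- {0}) D"
    using smooth unfolding smooth_on_def D_def dlist_append[symmetric] by blast
  have fs1: "smooth_on (- {0}) f"
    unfolding f_def D_def[symmetric]
    by (rule smooth_mult[OF U smooth_on_subset[OF R1s] Ds]) auto
  have f0: "\<And>y. y \<in> ball 0 (1/4) \<Longrightarrow> f y = 0" using rho_one by (simp add: f_def)
  have fs2: "smooth_on (ball 0 (1/4)) f"
    by (rule smooth_on_local[OF open_ball f0 smooth_const])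
  show "smooth_on UNIV (\<lambda>x. (1 - \<rho>0 x) * dlist [i, j] \<mu> x)"
    unfolding f_def[symmetric] smooth_on_def
  proof (intro allI ballI)
    fix c and z :: "real^'n"
    show "dlist c f differentiable (at z)"
    proof (cases "z = 0")
      case True
      then have "z \<in> ball 0 (1/4)" by simp
      then show ?thesis using fs2 unfolding smooth_on_def by blast
    next
      case False
      then have "z \<in> - {0}" by simp
      then show ?thesis using fs1 unfolding smooth_on_def by blast
    qed
  qed
  have "\<forall>c. \<exists>R. \<forall>z. \<bar>dlist c (\<lambda>x. 1 - \<rho>0 x) z\<bar> \<le> R"
  proof
    fix c
    let ?O = "- closure {x. \<rho>0 x \<noteq> 0}"
    have O: "open ?O" by auto
    have e: "\<And>y. y \<in> ?O \<Longrightarrow> 1 - \<rho>0 y = 1" using closure_subset[of "{x. \<rho>0 x \<noteq> 0}"] by auto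
    have "dlist c (\<lambda>x. 1 - \<rho>0 x) z = (if c = [] then 1 else 0)" if "norm z > 1/2" for z
    proof -
      have "z \<notin> ball 0 (1/2)" using that by simp
      then have "z \<in> ?O" using rho_supp by blast
      then show ?thesis using dlist_local[where U="?O" and F="\<lambda>x. 1 - \<rho>0 x" and G="\<lambda>_. 1" and z=z and ?is=c, OF O e] dlist_const[of c 1 z] by simp
    qed
    then show "\<exists>R. \<forall>z. \<bar>dlist c (\<lambda>x. 1 - \<rho>0 x) z\<bar> \<le> R"
      using dlist_bounded_compact_support[OF R1s, of "1/2" c] by auto
  qed
  from choice[OF this] obtain R where R: "\<And>c z. \<bar>dlist c (\<lambda>x. 1 - \<rho>0 x) z\<bar> \<le> R c" by blast
  have "\<forall>d. \<exists>B. \<forall>z. norm z \<ge> 1/4 \<longrightarrow> \<bar>dlist (d @ [i, j]) \<mu> z\<bar> \<le> B"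
    by (intro allI dlist_mu_bound[OF smooth homog]) (use beta2 in auto)
  from choice[OF this] obtain B where B: "\<And>d z. norm z \<ge> 1/4 \<Longrightarrow> \<bar>dlist (d @ [i, j]) \<mu> z\<bar> \<le> B d" by blast
  have "\<bar>dlist a f z\<bar> \<le> (\<Sum>(c,d)\<leftarrow>splits a. R c * B d)" for z
  proof (cases "norm z < 1/4")
    case True
    then have "dlist a f z = 0" using dlist_local[where U="ball 0 (1/4)" and F=f and G="\<lambda>_. 0" and z=z and ?is=a, OF open_ball f0] dlist_const[of a 0 z] by simp
    moreover have "0 \<le> (\<Sum>(c,d)\<leftarrow>splits a. R c * B d)"
    proof -
      have "0 \<le> R c" "0 \<le> B d" for c d using R[of c 0] B[of "axis undefined 1" d]
        by (auto intro: order_trans[OF abs_ge_zero] simp: norm_axis_1)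
      then have "(\<Sum>(c,d)\<leftarrow>splits a. (0::real)) \<le> (\<Sum>(c,d)\<leftarrow>splits a. R c * B d)"
        by (intro sum_list_mono') (auto simp: case_prod_unfold)
      then show ?thesis by (simp add: case_prod_unfold)
    qed
    ultimately show ?thesis by simp
  next
    case False
    then have z: "z \<in> - {0}" by auto
    have "dlist a f z = (\<Sum>(c,d)\<leftarrow>splits a. dlist c (\<lambda>x. 1 - \<rho>0 x) z * dlist d D z)"
      unfolding f_def D_def[symmetric]
      by (rule leibniz[OF U smooth_on_subset[OF R1s subset_UNIV] Ds z])
    also have "\<bar>\<dots>\<bar> \<le> (\<Sum>(c,d)\<leftarrow>splits a. \<bar>dlist c (\<lambda>x. 1 - \<rho>0 x) z * dlist d D z\<bar>)"
      using norm_sum_list_le[of "\<lambda>(c,d). dlist c (\<lambda>x. 1 - \<rho>0 x) z * dlist d D z" "splits a"]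
      by (simp add: case_prod_unfold)
    also have "\<dots> \<le> (\<Sum>(c,d)\<leftarrow>splits a. R c * B d)"
    proof (rule sum_list_mono', clarify)
      fix c d
      have "\<bar>dlist d D z\<bar> \<le> B d" using B[of z d] False by (simp add: D_def dlist_append)
      then show "\<bar>dlist c (\<lambda>x. 1 - \<rho>0 x) z * dlist d D z\<bar> \<le> R c * B d"
        using R[of c z] by (auto simp: abs_mult intro!: mult_mono)
    qed
    finally show ?thesis .
  qed
  then show "\<exists>A. \<forall>z. \<bar>dlist a (\<lambda>x. (1 - \<rho>0 x) * dlist [i, j] \<mu> x) z\<bar> \<le> A"
    unfolding f_def by blast
qed

lemma integrable_inv_sq: "integrable lborel (\<lambda>x::real. inverse (1 + x^2))"
  using integrable_inverse_1_plus_square unfolding set_integrable_def by simp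

lemma integrable_W:
  "integrable lborel (\<lambda>y::'a::euclidean_space. \<Prod>b\<in>Basis. inverse (1 + (y \<bullet> b)^2))"
proof (subst integrable_iff_bounded, intro conjI)
  show "(\<lambda>y::'a. \<Prod>b\<in>Basis. inverse (1 + (y \<bullet> b)^2)) \<in> borel_measurable lborel" by measurable
  have "(\<integral>\<^sup>+ (y::'a). ennreal (norm (\<Prod>b\<in>Basis. inverse (1 + (y \<bullet> b)^2))) \<partial>lborel)
      = (\<integral>\<^sup>+ (y::'a). (\<Prod>b\<in>(Basis::'a set). ennreal (inverse (1 + (y \<bullet> b)^2))) \<partial>lborel)"
  proof (rule nn_integral_cong)
    fix y :: 'a
    have "norm (\<Prod>b\<in>(Basis::'a set). inverse (1 + (y \<bullet> b)^2)) = (\<Prod>b\<in>(Basis::'a set). inverse (1 + (y \<bullet> b)^2))"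
      by (simp add: abs_prod prod_nonneg add_nonneg_nonneg)
    then show "ennreal (norm (\<Prod>b\<in>(Basis::'a set). inverse (1 + (y \<bullet> b)^2))) = (\<Prod>b\<in>(Basis::'a set). ennreal (inverse (1 + (y \<bullet> b)^2)))"
      by (simp add: prod_ennreal add_nonneg_nonneg)
  qed
  also have "\<dots> = (\<Prod>b\<in>(Basis::'a set). \<integral>\<^sup>+ t. ennreal (inverse (1 + t^2)) \<partial>lborel)"
    by (rule nn_integral_lborel_prod) auto
  also have "\<dots> < \<infinity>"
  proof -
    have "(\<integral>\<^sup>+ t. ennreal (inverse (1 + t^2)) \<partial>lborel) < \<infinity>"
      using integrable_inv_sq unfolding integrable_iff_bounded by simp
    then show ?thesis by (simp add: power_less_top_ennreal)
  qed
  finally show "(\<integral>\<^sup>+ (y::'a). ennreal (norm (\<Prod>b\<in>(Basis::'a set). inverse (1 + (y \<bullet> b)^2))) \<partial>lborel) < \<infinity>" .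
qed

lemma decay_le_W:
  fixes y :: "'a::euclidean_space"
  shows "1 / (1 + norm y) ^ (2 * DIM('a)) \<le> (\<Prod>b\<in>Basis. inverse (1 + (y \<bullet> b)^2))"
proof -
  have "(\<Prod>b\<in>(Basis::'a set). 1 + (y \<bullet> b)^2) \<le> (\<Prod>b\<in>(Basis::'a set). (1 + norm y)^2)"
  proof (rule prod_mono)
    fix b :: 'a assume b: "b \<in> Basis"
    have "\<bar>y \<bullet> b\<bar> \<le> norm y" using Basis_le_norm[OF b] .
    then have "(y \<bullet> b)^2 \<le> (norm y)^2" by (metis abs_ge_zero power2_abs power_mono)
    moreover have "0 \<le> norm y" by simp
    moreover have "0 \<le> (y \<bullet> b)^2" by simp
    moreover have "(1 + norm y)^2 = 1 + 2 * norm y + (norm y)^2" by (simp add: power2_sum)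
    ultimately show "0 \<le> 1 + (y \<bullet> b)^2 \<and> 1 + (y \<bullet> b)^2 \<le> (1 + norm y)^2"
      by linarith
  qed
  also have "\<dots> = (1 + norm y) ^ (2 * DIM('a))" by (simp add: power_mult[symmetric] mult.commute)
  finally have le: "(\<Prod>b\<in>(Basis::'a set). 1 + (y \<bullet> b)^2) \<le> (1 + norm y) ^ (2 * DIM('a))" .
  have pos: "0 < (\<Prod>b\<in>(Basis::'a set). 1 + (y \<bullet> b)^2)"
    by (intro prod_pos) (auto intro: add_pos_nonneg)
  have "1 / (1 + norm y) ^ (2 * DIM('a)) \<le> 1 / (\<Prod>b\<in>(Basis::'a set). 1 + (y \<bullet> b)^2)"
    by (rule divide_left_mono[OF le]) (use pos in \<open>auto intro!: mult_pos_pos zero_less_power add_pos_nonneg\<close>)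
  also have "\<dots> = (\<Prod>b\<in>Basis. inverse (1 + (y \<bullet> b)^2))"
    by (simp add: prod_inversef[symmetric] divide_inverse)
  finally show ?thesis .
qed

lemma integrable_decay:
  "integrable lborel (\<lambda>y::'a::euclidean_space. 1 / (1 + norm y) ^ (2 * DIM('a)))"
  by (rule Bochner_Integration.integrable_bound[OF integrable_W])
     (auto intro!: always_eventually decay_le_W simp: abs_prod prod_nonneg)

lemma integrable_translate:
  fixes G :: "'a::euclidean_space \<Rightarrow> 'b::{banach, second_countable_topology}"
  assumes "integrable lborel G"
  shows "integrable lborel (\<lambda>y. G (y + h))"
proof -
  have m: "G \<in> borel_measurable borel" using borel_measurable_integrable[OF assms] by simp
  have "integrable (distr lborel borel ((+) h)) G" using assms by (simp add: lborel_distr_plus)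
  then show ?thesis using integrable_distr_eq[of "(+) h" lborel borel G] m by (simp add: add.commute)
qed

lemma integral_translate:
  fixes G :: "'a::euclidean_space \<Rightarrow> 'b::{banach, second_countable_topology}"
  assumes "integrable lborel G"
  shows "(\<integral>y. G (y + h) \<partial>lborel) = (\<integral>y. G y \<partial>lborel)"
proof -
  have m: "G \<in> borel_measurable borel" using borel_measurable_integrable[OF assms] by simp
  have "(\<integral>y. G y \<partial>lborel) = (\<integral>y. G y \<partial>distr lborel borel ((+) h))" by (simp add: lborel_distr_plus)
  also have "\<dots> = (\<integral>y. G (h + y) \<partial>lborel)" by (rule integral_distr) (use m in auto)
  finally show ?thesis by (simp add: add.commute)
qed

definition ee :: "'a::euclidean_space \<Rightarrow> 'a \<Rightarrow> complex" where
  "ee \<xi> y = cis (- 2 * pi * (y \<bullet> \<xi>))"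

lemma ee_cont: "continuous_on UNIV (ee \<xi>)"
  unfolding ee_def by (intro continuous_intros)

lemma integrable_mult_ee:
  fixes G :: "'a::euclidean_space \<Rightarrow> complex"
  assumes "integrable lborel G"
  shows "integrable lborel (\<lambda>y. G y * ee \<xi> y)"
proof (rule Bochner_Integration.integrable_bound[OF assms])
  have "ee \<xi> \<in> borel_measurable borel" by (rule borel_measurable_continuous_onI[OF ee_cont])
  then have "ee \<xi> \<in> borel_measurable lborel" by simp
  then show "(\<lambda>y. G y * ee \<xi> y) \<in> borel_measurable lborel"
    using borel_measurable_integrable[OF assms] by measurable
  show "AE x in lborel. norm (G x * ee \<xi> x) \<le> norm (G x)"
    by (simp add: ee_def norm_mult)
qed

definition hh :: "'a::euclidean_space \<Rightarrow> 'a" where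
  "hh \<xi> = (1 / (2 * (norm \<xi>)^2)) *\<^sub>R \<xi>"

lemma ee_shift: "\<xi> \<noteq> 0 \<Longrightarrow> ee \<xi> (y + hh \<xi>) = - ee \<xi> y"
proof -
  assume "\<xi> \<noteq> 0"
  then have "(y + hh \<xi>) \<bullet> \<xi> = y \<bullet> \<xi> + 1/2"
    by (simp add: hh_def inner_add_left power2_norm_eq_inner[symmetric] field_simps)
  then have "- 2 * pi * ((y + hh \<xi>) \<bullet> \<xi>) = - 2 * pi * (y \<bullet> \<xi>) + (- pi)"
    by (simp add: field_simps)
  then have "ee \<xi> (y + hh \<xi>) = ee \<xi> y * cis (- pi)" by (simp add: ee_def cis_mult)
  moreover have "cis (- pi) = -1" by (simp add: complex_eq_iff)
  ultimately show ?thesis by simp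
qed

fun delta :: "nat \<Rightarrow> 'a::euclidean_space \<Rightarrow> ('a \<Rightarrow> complex) \<Rightarrow> 'a \<Rightarrow> complex" where
  "delta 0 h G = G"
| "delta (Suc N) h G = delta N h (\<lambda>y. G y - G (y + h))"

lemma integrable_delta: "integrable lborel G \<Longrightarrow> integrable lborel (delta N h G)"
proof (induction N arbitrary: G)
  case 0 then show ?case by simp
next
  case (Suc N)
  have "integrable lborel (\<lambda>y. G y - G (y + h))"
    using Suc.prems integrable_translate[OF Suc.prems] by auto
  then show ?case using Suc.IH by simp
qed

lemma delta_step:
  fixes G :: "'a::euclidean_space \<Rightarrow> complex"
  assumes G: "integrable lborel G" and \<xi>: "\<xi> \<noteq> 0"
  shows "(\<integral>y. (G y - G (y + hh \<xi>)) * ee \<xi> y \<partial>lborel) = 2 * (\<integral>y. G y * ee \<xi> y \<partial>lborel)"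
proof -
  have i1: "integrable lborel (\<lambda>y. G y * ee \<xi> y)" by (rule integrable_mult_ee[OF G])
  have i2: "integrable lborel (\<lambda>y. G (y + hh \<xi>) * ee \<xi> y)"
    by (rule integrable_mult_ee[OF integrable_translate[OF G]])
  have "(\<integral>y. G (y + hh \<xi>) * ee \<xi> y \<partial>lborel) = (\<integral>y. - (G (y + hh \<xi>) * ee \<xi> (y + hh \<xi>)) \<partial>lborel)"
    using ee_shift[OF \<xi>] by simp
  also have "\<dots> = - (\<integral>y. G (y + hh \<xi>) * ee \<xi> (y + hh \<xi>) \<partial>lborel)" by simp
  also have "(\<integral>y. G (y + hh \<xi>) * ee \<xi> (y + hh \<xi>) \<partial>lborel) = (\<integral>y. G y * ee \<xi> y \<partial>lborel)"
    using integral_translate[OF i1, of "hh \<xi>"] by simp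
  finally have "(\<integral>y. G (y + hh \<xi>) * ee \<xi> y \<partial>lborel) = - (\<integral>y. G y * ee \<xi> y \<partial>lborel)" .
  moreover have "(\<integral>y. (G y - G (y + hh \<xi>)) * ee \<xi> y \<partial>lborel)
      = (\<integral>y. G y * ee \<xi> y \<partial>lborel) - (\<integral>y. G (y + hh \<xi>) * ee \<xi> y \<partial>lborel)"
    using i1 i2 by (simp add: left_diff_distrib)
  ultimately show ?thesis by simp
qed

lemma delta_integral:
  fixes G :: "'a::euclidean_space \<Rightarrow> complex"
  assumes G: "integrable lborel G" and \<xi>: "\<xi> \<noteq> 0"
  shows "(\<integral>y. delta N (hh \<xi>) G y * ee \<xi> y \<partial>lborel) = 2 ^ N * (\<integral>y. G y * ee \<xi> y \<partial>lborel)"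
  using G
proof (induction N arbitrary: G)
  case 0 then show ?case by simp
next
  case (Suc N)
  have "integrable lborel (\<lambda>y. G y - G (y + hh \<xi>))"
    using Suc.prems integrable_translate[OF Suc.prems] by auto
  then show ?case using Suc.IH delta_step[OF Suc.prems \<xi>] by simp
qed

fun delta1 :: "nat \<Rightarrow> (real \<Rightarrow> complex) \<Rightarrow> real \<Rightarrow> complex" where
  "delta1 0 p = p"
| "delta1 (Suc N) p = delta1 N (\<lambda>s. p s - p (s + 1))"

lemma vd_shift:
  assumes "(f has_vector_derivative f') (at (s + 1))"
  shows "((\<lambda>s. f (s + 1)) has_vector_derivative f') (at s)"
proof -
  have "((\<lambda>s::real. s + 1) has_vector_derivative 1) (at s)" by (auto intro!: derivative_eq_intros)
  from vector_diff_chain_at[OF this assms] show ?thesis by (simp add: o_def)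
qed

lemma mvt1:
  fixes f :: "real \<Rightarrow> complex"
  assumes d: "\<And>s. (f has_vector_derivative f' s) (at s)"
    and B: "\<And>s. s \<in> {a..a+1} \<Longrightarrow> norm (f' s) \<le> B"
  shows "norm (f a - f (a + 1)) \<le> B"
proof -
  have c: "continuous_on {a..a+1} f"
    using d by (meson continuous_at_imp_continuous_on has_vector_derivative_continuous)
  obtain x where x: "x \<in> {a<..<a+1}" "norm (f (a+1) - f a) \<le> norm ((\<lambda>t. t *\<^sub>R f' x) ((a+1) - a))"
    using mvt_general[of a "a+1" f "\<lambda>x t. t *\<^sub>R f' x", OF _ c] d
    unfolding has_vector_derivative_def by auto
  then show ?thesis using B[of x] by (simp add: norm_minus_commute)
qed

lemma delta1_bound:
  assumes "\<And>k s. k < N \<Longrightarrow> (P k has_vector_derivative P (Suc k) s) (at s)"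
    and "\<And>s. s \<in> {s0..s0 + real N} \<Longrightarrow> norm (P N s) \<le> B"
  shows "norm (delta1 N (P 0) s0) \<le> B"
  using assms
proof (induction N arbitrary: P)
  case 0 then show ?case by simp
next
  case (Suc N)
  define Q where "Q k = (\<lambda>s. P k s - P k (s + 1))" for k
  have "norm (delta1 N (Q 0) s0) \<le> B"
  proof (rule Suc.IH)
    fix k s assume k: "k < N"
    show "(Q k has_vector_derivative Q (Suc k) s) (at s)"
      unfolding Q_def
      by (intro has_vector_derivative_diff Suc.prems(1) vd_shift) (use k in auto)
  next
    fix s assume s: "s \<in> {s0..s0 + real N}"
    show "norm (Q N s) \<le> B" unfolding Q_def
      by (rule mvt1[where f' = "P (Suc N)"]) (use Suc.prems s in auto)
  qed
  then show ?case by (simp add: Q_def)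
qed

lemma delta_delta1:
  "delta N h G (y + s *\<^sub>R h) = delta1 N (\<lambda>s. G (y + s *\<^sub>R h)) s"
proof (induction N arbitrary: G s)
  case 0 then show ?case by simp
next
  case (Suc N)
  have e: "(\<lambda>s. G (y + s *\<^sub>R h) - G (y + s *\<^sub>R h + h)) = (\<lambda>s. G (y + s *\<^sub>R h) - G (y + (s + 1) *\<^sub>R h))"
    by (simp add: scaleR_add_left add.assoc)
  show ?case using Suc.IH[of "\<lambda>y. G y - G (y + h)" s] by (simp add: e)
qed

definition Lk :: "nat \<Rightarrow> 'n::finite list set" where
  "Lk k = {is. length is = k}"

lemma vd_scale:
  "(f has_vector_derivative f') F \<Longrightarrow> ((\<lambda>x. c *\<^sub>R f x) has_vector_derivative c *\<^sub>R f') F"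
  by (rule bounded_linear.has_vector_derivative[OF bounded_linear_scaleR_right])

lemma Lk_finite: "finite (Lk k :: 'n::finite list set)"
  using finite_lists_length_eq[of "UNIV :: 'n set" k] by (simp add: Lk_def)

lemma Lk_card: "card (Lk k :: 'n::finite list set) = CARD('n) ^ k"
  using card_lists_length_eq[of "UNIV :: 'n set" k] by (simp add: Lk_def)

lemma Lk_Suc: "Lk (Suc k) = (\<lambda>(i, is). i # is) ` (UNIV \<times> Lk k)"
  unfolding Lk_def by (auto simp: image_iff length_Suc_conv)

lemma Lk_inj: "inj_on (\<lambda>(i, is). i # is) (UNIV \<times> Lk k)"
  by (auto simp: inj_on_def)

definition DD :: "nat \<Rightarrow> real^'n::finite \<Rightarrow> (real^'n \<Rightarrow> 'a::real_normed_vector) \<Rightarrow> real^'n \<Rightarrow> 'a" where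
  "DD k h G z = (\<Sum>is\<in>Lk k. (\<Prod>i\<leftarrow>is. h$i) *\<^sub>R dlist is G z)"

lemma line_deriv:
  fixes F :: "real^'n::finite \<Rightarrow> 'a::real_normed_vector"
  assumes d: "F differentiable (at (y + s *\<^sub>R h))"
  shows "((\<lambda>s. F (y + s *\<^sub>R h)) has_vector_derivative (\<Sum>i\<in>UNIV. h$i *\<^sub>R dpart i F (y + s *\<^sub>R h))) (at s)"
proof -
  let ?D = "frechet_derivative F (at (y + s *\<^sub>R h))"
  have A: "((\<lambda>s. y + s *\<^sub>R h) has_derivative (\<lambda>t. t *\<^sub>R h)) (at s)"
    by (auto intro!: derivative_eq_intros)
  have c: "((\<lambda>s. F (y + s *\<^sub>R h)) has_derivative (\<lambda>t. ?D (t *\<^sub>R h))) (at s)"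
    using has_derivative_compose[OF A dpart_has[OF d]] .
  have lin: "linear ?D" using has_derivative_linear[OF dpart_has[OF d]] .
  have "?D h = ?D (\<Sum>i\<in>UNIV. h$i *\<^sub>R axis i 1)"
    using basis_expansion[of h] by (simp add: scalar_mult_eq_scaleR)
  also have "\<dots> = (\<Sum>i\<in>UNIV. h$i *\<^sub>R ?D (axis i 1))"
    by (simp add: linear_sum[OF lin] linear.scaleR[OF lin])
  finally have "\<And>t. ?D (t *\<^sub>R h) = t *\<^sub>R (\<Sum>i\<in>UNIV. h$i *\<^sub>R dpart i F (y + s *\<^sub>R h))"
    by (simp add: linear.scaleR[OF lin] dpart_def)
  then show ?thesis using c unfolding has_vector_derivative_def by simp
qed

lemma DD_deriv:
  fixes G :: "real^'n::finite \<Rightarrow> 'a::real_normed_vector"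
  assumes sm: "smooth_on UNIV G"
  shows "((\<lambda>s. DD k h G (y + s *\<^sub>R h)) has_vector_derivative DD (Suc k) h G (y + s *\<^sub>R h)) (at s)"
proof -
  let ?z = "y + s *\<^sub>R h"
  have "((\<lambda>s. DD k h G (y + s *\<^sub>R h)) has_vector_derivative
        (\<Sum>is\<in>Lk k. (\<Prod>i\<leftarrow>is. h$i) *\<^sub>R (\<Sum>i\<in>UNIV. h$i *\<^sub>R dpart i (dlist is G) ?z))) (at s)"
    unfolding DD_def
    by (intro has_vector_derivative_sum vd_scale line_deriv)
       (use sm in \<open>auto simp: smooth_on_def\<close>)
  also have "(\<Sum>is\<in>Lk k. (\<Prod>i\<leftarrow>is. h$i) *\<^sub>R (\<Sum>i\<in>UNIV. h$i *\<^sub>R dpart i (dlist is G) ?z))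
     = (\<Sum>(i, is)\<in>UNIV \<times> Lk k. (\<Prod>j\<leftarrow>i # is. h$j) *\<^sub>R dlist (i # is) G ?z)"
    by (simp add: scaleR_sum_right sum.cartesian_product[symmetric] sum.swap[of _ "Lk k"] mult.commute)
  also have "\<dots> = DD (Suc k) h G ?z"
    unfolding DD_def Lk_Suc sum.reindex[OF Lk_inj] by (simp add: case_prod_unfold)
  finally show ?thesis .
qed

lemma DD_bound:
  fixes G :: "real^'n::finite \<Rightarrow> 'a::real_normed_vector"
  assumes K: "\<And>is. length is = k \<Longrightarrow> norm (dlist is G z) \<le> K"
  shows "norm (DD k h G z) \<le> real (CARD('n) ^ k) * (norm h ^ k * K)"
proof -
  have "norm (DD k h G z) \<le> (\<Sum>is\<in>Lk k. norm ((\<Prod>i\<leftarrow>is. h$i) *\<^sub>R dlist is G z))"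
    unfolding DD_def by (rule norm_sum)
  also have "\<dots> \<le> (\<Sum>is\<in>(Lk k :: 'n list set). norm h ^ k * K)"
  proof (rule sum_mono)
    fix "is" :: "'n list" assume "is": "is \<in> Lk k"
    have "\<bar>\<Prod>i\<leftarrow>is. h$i\<bar> \<le> norm h ^ length is"
    proof (induction "is")
      case Nil then show ?case by simp
    next
      case (Cons a "is")
      have "\<bar>h$a\<bar> \<le> norm h" by (rule component_le_norm_cart)
      then show ?case using Cons by (simp add: abs_mult mult_mono)
    qed
    then show "norm ((\<Prod>i\<leftarrow>is. h$i) *\<^sub>R dlist is G z) \<le> norm h ^ k * K"
      using K[of "is"] "is" by (auto simp: Lk_def intro!: mult_mono)
  qed
  also have "\<dots> = real (CARD('n) ^ k) * (norm h ^ k * K)" by (simp add: Lk_card)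
  finally show ?thesis .
qed

abbreviation wdec :: "real^'n::finite \<Rightarrow> real" where
  "wdec y \<equiv> 1 / (1 + norm y) ^ (2 * DIM(real^'n))"

lemma integrable_wdec_shift:
  fixes x0 :: "real^'n::finite"
  shows "integrable lborel (\<lambda>y::real^'n. wdec (y - x0))"
  using integrable_translate[OF integrable_decay[where 'a="real^'n"], of "- x0"] by simp

lemma integral_wdec_shift:
  fixes x0 :: "real^'n::finite"
  shows "(\<integral>y. wdec (y - x0) \<partial>lborel) = (\<integral>y. wdec (y::real^'n) \<partial>lborel)"
  using integral_translate[OF integrable_decay[where 'a="real^'n"], of "- x0"] by simp

lemma smooth_cont_UNIV: "smooth_on UNIV g \<Longrightarrow> continuous_on UNIV g"
  using smooth_cont[of UNIV g "[]"] by simp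

lemma integrable_by_decay:
  fixes g :: "real^'n::finite \<Rightarrow> complex"
  assumes c: "continuous_on UNIV g" and K0: "\<And>z. norm (g z) \<le> K0 * wdec (z - x0)"
  shows "integrable lborel g"
proof (rule Bochner_Integration.integrable_bound)
  show "integrable lborel (\<lambda>y. K0 * wdec (y - x0))"
    by (rule integrable_mult_right) (rule integrable_wdec_shift)
  show "g \<in> borel_measurable lborel" using borel_measurable_continuous_onI[OF c] by simp
  show "AE x in lborel. norm (g x) \<le> norm (K0 * wdec (x - x0))"
  proof (intro always_eventually allI)
    fix x
    have "K0 * wdec (x - x0) \<le> norm (K0 * wdec (x - x0))" unfolding real_norm_def by (rule abs_ge_self)
    then show "norm (g x) \<le> norm (K0 * wdec (x - x0))" using K0[of x] by linarith
  qed
qed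

lemma decay_shift:
  fixes z v :: "real^'n::finite"
  assumes "norm v \<le> a"
  shows "wdec z \<le> (1 + a) ^ (2 * DIM(real^'n)) * wdec (z + v)"
proof -
  let ?M = "2 * DIM(real^'n)"
  have a0: "0 \<le> a" using assms norm_ge_zero[of v] by linarith
  have "1 + norm (z + v) \<le> (1 + norm z) * (1 + a)"
  proof -
    have "norm (z + v) \<le> norm z + norm v" by (rule norm_triangle_ineq)
    moreover have "0 \<le> norm z * a" using a0 by simp
    ultimately show ?thesis using assms by (simp add: algebra_simps)
  qed
  then have le: "(1 + norm (z + v)) ^ ?M \<le> ((1 + norm z) * (1 + a)) ^ ?M"
    by (intro power_mono) auto
  have p1: "0 < (1 + norm (z + v)) ^ ?M" by (intro zero_less_power) (simp add: add_pos_nonneg)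
  have p2: "0 < (1 + norm z) ^ ?M" by (intro zero_less_power) (simp add: add_pos_nonneg)
  have p3: "0 < (1 + a) ^ ?M" using a0 by (intro zero_less_power) simp
  have "wdec z = (1 + a) ^ ?M / ((1 + norm z) * (1 + a)) ^ ?M"
    using p3 a0 by (simp add: power_mult_distrib)
  also have "\<dots> \<le> (1 + a) ^ ?M / (1 + norm (z + v)) ^ ?M"
    by (rule divide_left_mono[OF le]) (use p1 p2 p3 in \<open>auto simp: power_mult_distrib\<close>)
  also have "\<dots> = (1 + a) ^ ?M * wdec (z + v)" by simp
  finally show ?thesis .
qed

lemma norm_hh: "norm (hh \<xi>) = 1 / (2 * norm \<xi>)"
  by (cases "\<xi> = 0") (simp_all add: hh_def power2_eq_square)

lemma DD0:
  fixes G :: "real^'n::finite \<Rightarrow> 'a::real_normed_vector"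
  shows "DD 0 h G z = G z"
proof -
  have "Lk 0 = {[] :: 'n list}" by (auto simp: Lk_def)
  then show ?thesis by (simp add: DD_def)
qed

definition Iw :: "'n::finite itself \<Rightarrow> real" where
  "Iw _ = (\<integral>y. wdec (y::real^'n) \<partial>lborel)"

lemma fourier_decay:
  fixes g :: "real^'n::finite \<Rightarrow> complex" and x0 :: "real^'n"
  assumes sm: "smooth_on UNIV g"
    and K0: "\<And>z. norm (g z) \<le> K0 * wdec (z - x0)"
    and KN: "\<And>is z. length is = N \<Longrightarrow> norm (dlist is g z) \<le> KN * wdec (z - x0)"
    and \<xi>: "norm \<xi> \<ge> 1"
  shows "norm (\<integral>y. g y * ee \<xi> y \<partial>lborel)
     \<le> (real CARD('n) ^ N * KN * (1 + real N / 2) ^ (2 * DIM(real^'n)) * Iw TYPE('n) / 4 ^ N) / norm \<xi> ^ N"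
proof -
  let ?M = "2 * DIM(real^'n)"
  let ?h = "hh \<xi>"
  let ?B = "real CARD('n) ^ N * (norm ?h ^ N * KN) * (1 + real N / 2) ^ ?M"
  have \<xi>0: "\<xi> \<noteq> 0" using \<xi> by auto
  have gi: "integrable lborel g" by (rule integrable_by_decay[OF smooth_cont_UNIV[OF sm] K0])
  have KN0: "0 \<le> KN" using KN[of "replicate N undefined" x0] by (auto intro: order_trans[OF norm_ge_zero])
  have nh: "norm ?h \<le> 1/2" using \<xi> by (simp add: norm_hh divide_le_eq)
  have dbound: "norm (delta N ?h g y) \<le> ?B * wdec (y - x0)" for y
  proof -
    have "delta N ?h g y = delta1 N (\<lambda>s. DD 0 ?h g (y + s *\<^sub>R ?h)) 0"
      using delta_delta1[of N ?h g y 0] by (simp add: DD0)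
    also have "norm \<dots> \<le> ?B * wdec (y - x0)"
    proof (rule delta1_bound[where P="\<lambda>k s. DD k ?h g (y + s *\<^sub>R ?h)"])
      fix k s show "((\<lambda>s. DD k ?h g (y + s *\<^sub>R ?h)) has_vector_derivative DD (Suc k) ?h g (y + s *\<^sub>R ?h)) (at s)"
        by (rule DD_deriv[OF sm])
    next
      fix s assume s: "s \<in> {0..0 + real N}"
      let ?C1 = "real (CARD('n) ^ N) * (norm ?h ^ N * KN)"
      have A: "norm (DD N ?h g (y + s *\<^sub>R ?h)) \<le> real (CARD('n) ^ N) * (norm ?h ^ N * (KN * wdec (y + s *\<^sub>R ?h - x0)))"
        by (rule DD_bound) (rule KN)
      have W: "wdec (y + s *\<^sub>R ?h - x0) \<le> (1 + real N / 2) ^ ?M * wdec (y + s *\<^sub>R ?h - x0 + (- (s *\<^sub>R ?h)))"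
      proof (rule decay_shift)
        have "norm (- (s *\<^sub>R ?h)) = s * norm ?h" using s by simp
        also have "\<dots> \<le> real N * (1/2)" using s nh by (intro mult_mono) auto
        finally show "norm (- (s *\<^sub>R ?h)) \<le> real N / 2" by simp
      qed
      have C1: "0 \<le> ?C1" using KN0 by simp
      have "norm (DD N ?h g (y + s *\<^sub>R ?h)) \<le> ?C1 * wdec (y + s *\<^sub>R ?h - x0)"
        using A by (simp add: mult_ac)
      also have "\<dots> \<le> ?C1 * ((1 + real N / 2) ^ ?M * wdec (y - x0))"
        using mult_left_mono[OF W C1] by (simp add: algebra_simps)
      finally show "norm (DD N ?h g (y + s *\<^sub>R ?h)) \<le> ?B * wdec (y - x0)"
        by (simp add: mult_ac)
    qed
    finally show ?thesis .
  qed
  have di: "integrable lborel (delta N ?h g)" by (rule integrable_delta[OF gi])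
  have "2 ^ N * norm (\<integral>y. g y * ee \<xi> y \<partial>lborel) = norm (\<integral>y. delta N ?h g y * ee \<xi> y \<partial>lborel)"
    using delta_integral[OF gi \<xi>0, of N] by (simp add: norm_mult norm_power)
  also have "\<dots> \<le> (\<integral>y. norm (delta N ?h g y * ee \<xi> y) \<partial>lborel)" by (rule integral_norm_bound)
  also have "\<dots> \<le> (\<integral>y. ?B * wdec (y - x0) \<partial>lborel)"
  proof (rule integral_mono)
    show "integrable lborel (\<lambda>y. norm (delta N ?h g y * ee \<xi> y))"
      using integrable_norm[OF integrable_mult_ee[OF di]] .
    show "integrable lborel (\<lambda>y. ?B * wdec (y - x0))"
      by (rule integrable_mult_right) (rule integrable_wdec_shift)
    fix y show "norm (delta N ?h g y * ee \<xi> y) \<le> ?B * wdec (y - x0)"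
      using dbound[of y] by (simp add: norm_mult ee_def)
  qed
  also have "\<dots> = ?B * (\<integral>y. wdec (y - x0) \<partial>lborel)" by (rule integral_mult_right_zero)
  also have "\<dots> = ?B * Iw TYPE('n)" by (simp only: integral_wdec_shift Iw_def)
  finally have main: "2 ^ N * norm (\<integral>y. g y * ee \<xi> y \<partial>lborel) \<le> ?B * Iw TYPE('n)" .
  let ?X = "norm (\<integral>y. g y * ee \<xi> y \<partial>lborel)"
  let ?B' = "real CARD('n) ^ N * KN * (1 + real N / 2) ^ (2 * DIM(real^'n)) * Iw TYPE('n)"
  have hN: "norm ?h ^ N = 1 / (2 ^ N * norm \<xi> ^ N)" by (simp add: norm_hh power_mult_distrib power_one_over)
  have "2 ^ N * ?X \<le> ?B' * norm ?h ^ N" using main by (simp add: mult_ac)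
  also have "\<dots> = ?B' / (2 ^ N * norm \<xi> ^ N)" by (simp add: hN)
  finally have m2: "2 ^ N * ?X \<le> ?B' / (2 ^ N * norm \<xi> ^ N)" .
  have pos: "0 < (2::real) ^ N" by simp
  have "?X \<le> ?B' / (2 ^ N * norm \<xi> ^ N) / 2 ^ N"
    unfolding pos_le_divide_eq[OF pos] using m2 by (simp add: mult.commute)
  also have "\<dots> = ?B' / (2 ^ N * 2 ^ N * norm \<xi> ^ N)"
    by (simp only: divide_divide_eq_left mult.commute mult.left_commute)
  also have "(2::real) ^ N * 2 ^ N = 4 ^ N" by (simp add: power_mult_distrib[symmetric])
  also have "?B' / (4 ^ N * norm \<xi> ^ N) = (?B' / 4 ^ N) / norm \<xi> ^ N"
    by (simp only: divide_divide_eq_left)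
  finally show ?thesis by simp
qed

lemma jbr_ge1: "jbr \<xi> \<ge> 1"
  by (simp add: jbr_def)

lemma jbr_le: "norm \<xi> \<ge> 1 \<Longrightarrow> jbr \<xi> \<le> 2 * norm \<xi>"
proof -
  assume a: "norm \<xi> \<ge> 1"
  have "1 \<le> norm \<xi> * norm \<xi>" using mult_mono[OF a a] by simp
  then have "1 + (norm \<xi>)^2 \<le> (2 * norm \<xi>)^2" by (simp add: power2_eq_square)
  then have s1: "sqrt (1 + (norm \<xi>)^2) \<le> sqrt ((2 * norm \<xi>)^2)" by (rule real_sqrt_le_mono)
  have s2: "sqrt ((2 * norm \<xi>)^2) = 2 * norm \<xi>" by (rule real_sqrt_unique) auto
  show ?thesis unfolding jbr_def using s1 s2 by linarith
qed

lemma jbr_le2: "norm \<xi> \<le> 1 \<Longrightarrow> jbr \<xi> \<le> 2"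
proof -
  assume a: "norm \<xi> \<le> 1"
  have "(norm \<xi>)^2 \<le> 1" using a by (simp add: power_le_one)
  then have "1 + (norm \<xi>)^2 \<le> 2^2" by simp
  then have "sqrt (1 + (norm \<xi>)^2) \<le> sqrt (2^2)" by (rule real_sqrt_le_mono)
  then show ?thesis unfolding jbr_def by simp
qed

lemma sum_list_mult_const_right: "(\<Sum>q\<leftarrow>L. h q * (c::real)) = (\<Sum>q\<leftarrow>L. h q) * c"
  by (induction L) (auto simp: algebra_simps)

lemma sum_list_divide_const: "(\<Sum>q\<leftarrow>L. h q / (c::real)) = (\<Sum>q\<leftarrow>L. h q) / c"
  by (induction L) (auto simp: add_divide_distrib)

lemma window_dlist:
  fixes \<phi> :: "real^'n::finite \<Rightarrow> complex"
  assumes sm: "smooth_on UNIV \<phi>"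
  shows "dlist b (\<lambda>y. cnj (\<phi> (y - x))) z = cnj (dlist b \<phi> (z - x))"
    and "smooth_on UNIV (\<lambda>y. cnj (\<phi> (y - x)))"
  using dlist_linear[OF bounded_linear_cnj open_UNIV dlist_translate(2)[OF sm, of x], of z b]
    dlist_translate(1)[OF sm] smooth_linear[OF bounded_linear_cnj open_UNIV dlist_translate(2)[OF sm, of x]]
  by auto

lemma in_W_main:
  fixes f :: "real^'n::finite \<Rightarrow> real" and \<phi> :: "real^'n \<Rightarrow> complex"
  assumes fs: "smooth_on UNIV f"
    and fb: "\<And>a. \<exists>A. \<forall>z. \<bar>dlist a f z\<bar> \<le> A"
    and win: "schwartz \<phi>"
  shows "in_W_inf_inf \<phi> s (\<lambda>x. complex_of_real (f x))"
proof -
  let ?M = "2 * DIM(real^'n)"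
  have \<phi>s: "smooth_on UNIV \<phi>" using win by (simp add: schwartz_def)
  from fb obtain A where A: "\<And>a z. \<bar>dlist a f z\<bar> \<le> A a" by metis
  have "\<forall>b. \<exists>C. \<forall>w. (1 + norm w) ^ ?M * norm (dlist b \<phi> w) \<le> C"
    using win by (simp add: schwartz_def)
  from choice[OF this] obtain C where C: "\<And>b w. (1 + norm w) ^ ?M * norm (dlist b \<phi> w) \<le> C b" by blast
  have Cw: "norm (dlist b \<phi> w) \<le> C b * wdec w" for b w
  proof -
    have p: "0 < (1 + norm w) ^ ?M" by (intro zero_less_power) (simp add: add_pos_nonneg)
    show ?thesis using C[of w b] p by (simp add: field_simps)
  qed
  define fc where "fc = (\<lambda>y. complex_of_real (f y))"
  have fcs: "smooth_on UNIV fc" unfolding fc_def by (rule smooth_linear[OF bounded_linear_of_real open_UNIV fs])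
  have fcd: "dlist a fc z = of_real (dlist a f z)" for a z
    unfolding fc_def by (rule dlist_linear[OF bounded_linear_of_real open_UNIV fs]) simp
  define g where "g x = (\<lambda>y. fc y * cnj (\<phi> (y - x)))" for x
  have gs: "smooth_on UNIV (g x)" for x
    unfolding g_def by (rule smooth_mult[OF open_UNIV fcs window_dlist(2)[OF \<phi>s]])
  define KK where "KK is = (\<Sum>(a,b)\<leftarrow>splits is. A a * C b)" for "is"
  have gb: "norm (dlist is (g x) z) \<le> KK is * wdec (z - x)" for "is" x z
  proof -
    have "dlist is (g x) z = (\<Sum>(a,b)\<leftarrow>splits is. dlist a fc z * dlist b (\<lambda>y. cnj (\<phi> (y - x))) z)"
      unfolding g_def by (rule leibniz[OF open_UNIV fcs window_dlist(2)[OF \<phi>s]]) simp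
    also have "norm \<dots> \<le> (\<Sum>(a,b)\<leftarrow>splits is. norm (dlist a fc z * dlist b (\<lambda>y. cnj (\<phi> (y - x))) z))"
      using norm_sum_list_le[of "\<lambda>(a,b). dlist a fc z * dlist b (\<lambda>y. cnj (\<phi> (y - x))) z" "splits is"]
      by (simp add: case_prod_unfold)
    also have "\<dots> \<le> (\<Sum>(a,b)\<leftarrow>splits is. A a * C b * wdec (z - x))"
    proof (rule sum_list_mono', clarify)
      fix a b
      have "norm (dlist a fc z) \<le> A a" using A[of a z] by (simp add: fcd)
      moreover have "norm (dlist b (\<lambda>y. cnj (\<phi> (y - x))) z) \<le> C b * wdec (z - x)"
        using Cw[of b "z - x"] by (simp add: window_dlist(1)[OF \<phi>s])
      ultimately show "norm (dlist a fc z * dlist b (\<lambda>y. cnj (\<phi> (y - x))) z) \<le> A a * C b * wdec (z - x)"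
        unfolding norm_mult mult.assoc by (rule mult_mono) (use A[of a z] in auto)
    qed
    also have "\<dots> = KK is * wdec (z - x)"
      unfolding KK_def by (simp add: sum_list_mult_const_right sum_list_divide_const case_prod_unfold)
    finally show ?thesis .
  qed
  have KK0: "0 \<le> KK is" for "is"
    using gb[of "is" 0 0] by (auto intro: order_trans[OF norm_ge_zero])
  define KN where "KN n = (\<Sum>is\<in>(Lk n :: 'n list set). KK is)" for n
  have gbN: "norm (dlist is (g x) z) \<le> KN n * wdec (z - x)" if "length is = n" for "is" n x z
  proof -
    have "KK is \<le> KN n" unfolding KN_def
      by (rule member_le_sum) (use that KK0 Lk_finite in \<open>auto simp: Lk_def\<close>)
    then show ?thesis using gb[of "is" x z] by (smt (verit) mult_right_mono divide_nonneg_nonneg zero_le_power norm_ge_zero)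
  qed
  have g0: "norm (g x z) \<le> KN 0 * wdec (z - x)" for x z using gbN[of "[]" 0 x z] by simp
  have gi: "integrable lborel (g x)" for x
    by (rule integrable_by_decay[OF smooth_cont_UNIV[OF gs] g0])
  have ST: "STFT \<phi> (\<lambda>x. complex_of_real (f x)) x \<xi> = (\<integral>y. g x y * ee \<xi> y \<partial>lborel)" for x \<xi>
    by (simp add: STFT_def g_def fc_def ee_def)
  have integ: "integrable lborel (\<lambda>y. complex_of_real (f y) * cnj (\<phi> (y - x)) * cis (- 2 * pi * (y \<bullet> \<xi>)))" for x \<xi>
    using integrable_mult_ee[OF gi[of x], of \<xi>] by (simp add: g_def fc_def ee_def)
  define N where "N = nat \<lceil>s\<rceil>"
  have sN: "s \<le> real N" unfolding N_def by linarith
  define CN where "CN = real CARD('n) ^ N * KN N * (1 + real N / 2) ^ ?M * Iw TYPE('n) / 4 ^ N"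
  have Iw0: "0 \<le> Iw TYPE('n)" unfolding Iw_def by (rule integral_nonneg_AE) (auto intro!: always_eventually)
  have "norm (STFT \<phi> (\<lambda>x. complex_of_real (f x)) x \<xi>) * jbr \<xi> powr s \<le> (CN + KN 0 * Iw TYPE('n)) * 2 ^ N" for x \<xi>
  proof -
    have jp: "jbr \<xi> powr s \<le> jbr \<xi> ^ N"
      using powr_mono[OF sN jbr_ge1[of \<xi>]] jbr_ge1[of \<xi>] by (simp add: powr_realpow)
    have CN0: "0 \<le> CN" unfolding CN_def using KN_def KK0 Iw0
      by (auto intro!: mult_nonneg_nonneg divide_nonneg_nonneg sum_nonneg)
    have "0 \<le> KN 0" unfolding KN_def using KK0 by (simp add: sum_nonneg)
    then have K00: "0 \<le> KN 0 * Iw TYPE('n)" using Iw0 by simp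
    show ?thesis
    proof (cases "norm \<xi> \<ge> 1")
      case True
      have F: "norm (STFT \<phi> (\<lambda>x. complex_of_real (f x)) x \<xi>) \<le> CN / norm \<xi> ^ N"
        unfolding ST CN_def
        by (rule fourier_decay[OF gs g0 gbN True])
      have "jbr \<xi> ^ N \<le> (2 * norm \<xi>) ^ N" by (rule power_mono[OF jbr_le[OF True]]) (use jbr_ge1[of \<xi>] in simp)
      with jp have J: "jbr \<xi> powr s \<le> 2 ^ N * norm \<xi> ^ N" by (simp add: power_mult_distrib)
      have "norm (STFT \<phi> (\<lambda>x. complex_of_real (f x)) x \<xi>) * jbr \<xi> powr s \<le> CN / norm \<xi> ^ N * (2 ^ N * norm \<xi> ^ N)"
        by (rule mult_mono[OF F J]) (use CN0 True in auto)
      also have "\<dots> = CN * 2 ^ N"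
      proof -
        have "norm \<xi> > 0" using True by linarith
        then have nz: "norm \<xi> ^ N \<noteq> 0" by simp
        have gen: "\<And>c d x::real. x \<noteq> 0 \<Longrightarrow> c / x * (d * x) = c * d" by (simp add: field_simps)
        show ?thesis by (rule gen[OF nz])
      qed
      finally show ?thesis using K00 by (smt (verit) mult_right_mono zero_le_power)
    next
      case False
      have "norm (STFT \<phi> (\<lambda>x. complex_of_real (f x)) x \<xi>) \<le> (\<integral>y. norm (g x y * ee \<xi> y) \<partial>lborel)"
        unfolding ST by (rule integral_norm_bound)
      also have "\<dots> \<le> (\<integral>y. KN 0 * wdec (y - x) \<partial>lborel)"
      proof (rule integral_mono)
        show "integrable lborel (\<lambda>y. norm (g x y * ee \<xi> y))" using integrable_norm[OF integrable_mult_ee[OF gi]] .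
        show "integrable lborel (\<lambda>y. KN 0 * wdec (y - x))" by (rule integrable_mult_right) (rule integrable_wdec_shift)
        fix y show "norm (g x y * ee \<xi> y) \<le> KN 0 * wdec (y - x)" using g0[of x y] by (simp add: norm_mult ee_def)
      qed
      also have "\<dots> = KN 0 * (\<integral>y. wdec (y - x) \<partial>lborel)" by (rule integral_mult_right_zero)
      also have "\<dots> = KN 0 * Iw TYPE('n)" by (simp only: integral_wdec_shift Iw_def)
      finally have F: "norm (STFT \<phi> (\<lambda>x. complex_of_real (f x)) x \<xi>) \<le> KN 0 * Iw TYPE('n)" .
      have "jbr \<xi> ^ N \<le> 2 ^ N" by (rule power_mono[OF jbr_le2]) (use False jbr_ge1[of \<xi>] in auto)
      with jp have J: "jbr \<xi> powr s \<le> 2 ^ N" by simp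
      have "norm (STFT \<phi> (\<lambda>x. complex_of_real (f x)) x \<xi>) * jbr \<xi> powr s \<le> (KN 0 * Iw TYPE('n)) * 2 ^ N"
        by (rule mult_mono[OF F J]) (use K00 in auto)
      then show ?thesis using CN0 by (smt (verit) mult_right_mono zero_le_power)
    qed
  qed
  then show ?thesis unfolding in_W_inf_inf_def using integ by blast
qed

lemma second_deriv_nonneg:
  fixes h h' :: "real \<Rightarrow> real"
  assumes d: "\<delta> > 0" and min: "\<And>t. \<bar>t\<bar> < \<delta> \<Longrightarrow> h 0 \<le> h t"
    and D1: "\<And>t. \<bar>t\<bar> < \<delta> \<Longrightarrow> DERIV h t :> h' t"
    and D2: "DERIV h' 0 :> c"
  shows "c \<ge> 0"
proof (rule ccontr)
  assume "\<not> c \<ge> 0"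
  then have c: "c < 0" by simp
  have h'0: "h' 0 = 0"
    by (rule DERIV_local_min[OF D1[of 0] d]) (use d min in auto)
  obtain e where e: "e > 0" "\<And>s. s > 0 \<Longrightarrow> s < e \<Longrightarrow> h' 0 > h' (0 + s)"
    using DERIV_neg_dec_right[OF D2 c] by blast
  define t where "t = min e \<delta> / 2"
  have t: "0 < t" "t < e" "t < \<delta>" using e d by (auto simp: t_def)
  have "h t < h 0"
  proof (rule DERIV_neg_imp_decreasing_open[OF t(1)])
    fix x assume x: "0 < x" "x < t"
    show "\<exists>y. DERIV h x :> y \<and> y < 0"
      using D1[of x] e(2)[of x] x t h'0 by auto
  next
    show "continuous_on {0..t} h"
    proof (rule continuous_at_imp_continuous_on, rule ballI)
      fix x assume "x \<in> {0..t}"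
      then have "\<bar>x\<bar> < \<delta>" using t by auto
      then show "isCont h x" using D1 DERIV_isCont by blast
    qed
  qed
  then show False using min[of t] t by auto
qed

lemma powr_deriv2:
  fixes a b \<beta> :: real
  defines "q \<equiv> \<lambda>t. 1 + 2 * t * a + t^2 * b"
  defines "q' \<equiv> \<lambda>t. 2 * a + 2 * t * b"
  shows "\<And>t. q t > 0 \<Longrightarrow> DERIV (\<lambda>t. q t powr (\<beta>/2)) t :> \<beta>/2 * (q t powr (\<beta>/2 - 1) * q' t)"
    and "DERIV (\<lambda>t. \<beta>/2 * (q t powr (\<beta>/2 - 1) * q' t)) 0 :> \<beta> * (\<beta> - 2) * a^2 + \<beta> * b"
proof -
  have Dq: "DERIV q t :> q' t" for t
    unfolding q_def q'_def by (auto intro!: derivative_eq_intros simp: power2_eq_square)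
  show "\<And>t. q t > 0 \<Longrightarrow> DERIV (\<lambda>t. q t powr (\<beta>/2)) t :> \<beta>/2 * (q t powr (\<beta>/2 - 1) * q' t)"
    using DERIV_fun_powr[OF Dq, of _ "\<beta>/2"] by (simp add: mult.assoc)
  have q0: "q 0 = 1" by (simp add: q_def)
  have A: "DERIV (\<lambda>t. q t powr (\<beta>/2 - 1)) 0 :> (\<beta>/2 - 1) * q 0 powr (\<beta>/2 - 1 - 1) * q' 0"
    using DERIV_fun_powr[OF Dq, of 0 "\<beta>/2 - 1"] q0 by simp
  have B: "DERIV q' 0 :> 2 * b" unfolding q'_def by (auto intro!: derivative_eq_intros)
  have "DERIV (\<lambda>t. \<beta>/2 * (q t powr (\<beta>/2 - 1) * q' t)) 0 :>
      \<beta>/2 * ((\<beta>/2 - 1) * q 0 powr (\<beta>/2 - 1 - 1) * q' 0 * q' 0 + q 0 powr (\<beta>/2 - 1) * (2 * b))"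
    using DERIV_cmult[OF DERIV_mult[OF A B], of "\<beta>/2"] by (simp add: mult.commute)
  also have "\<beta>/2 * ((\<beta>/2 - 1) * q 0 powr (\<beta>/2 - 1 - 1) * q' 0 * q' 0 + q 0 powr (\<beta>/2 - 1) * (2 * b))
      = \<beta> * (\<beta> - 2) * a^2 + \<beta> * b"
    by (simp add: q0 q'_def power2_eq_square field_simps)
  finally show "DERIV (\<lambda>t. \<beta>/2 * (q t powr (\<beta>/2 - 1) * q' t)) 0 :> \<beta> * (\<beta> - 2) * a^2 + \<beta> * b" .
qed

lemma line_deriv_real:
  fixes F :: "real^'n::finite \<Rightarrow> real"
  assumes d: "F differentiable (at (y + s *\<^sub>R h))"
  shows "DERIV (\<lambda>s. F (y + s *\<^sub>R h)) s :> (\<Sum>i\<in>UNIV. h$i * dpart i F (y + s *\<^sub>R h))"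
  using line_deriv[OF d] by (simp add: has_real_derivative_iff_has_vector_derivative)

lemma sq_powr_half: "(x::real) \<ge> 0 \<Longrightarrow> (x^2) powr (b/2) = x powr b"
proof (cases "x = 0")
  case False
  assume "x \<ge> 0"
  then have x: "x > 0" using False by simp
  have e: "x^2 = x powr 2" using powr_realpow[OF x, of 2] by simp
  have "(x^2) powr (b/2) = (x powr 2) powr (b/2)" by (simp only: e)
  also have "\<dots> = x powr (2 * (b/2))" by (rule powr_powr)
  finally show ?thesis by simp
qed simp

lemma quad_form_eq:
  fixes H :: "real^'n::finite^'n"
  shows "v \<bullet> (H *v v) = (\<Sum>i\<in>UNIV. v$i * (\<Sum>j\<in>UNIV. v$j * H$j$i))"
proof -
  have "v \<bullet> (H *v v) = (\<Sum>i\<in>UNIV. v$i * (\<Sum>j\<in>UNIV. H$i$j * v$j))"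
    by (simp add: inner_vec_def matrix_vector_mult_def)
  also have "\<dots> = (\<Sum>i\<in>UNIV. \<Sum>j\<in>UNIV. v$i * v$j * H$i$j)"
    by (simp add: sum_distrib_left mult_ac)
  also have "\<dots> = (\<Sum>j\<in>UNIV. \<Sum>i\<in>UNIV. v$i * v$j * H$i$j)" by (rule sum.swap)
  also have "\<dots> = (\<Sum>i\<in>UNIV. v$i * (\<Sum>j\<in>UNIV. v$j * H$j$i))"
    by (simp add: sum_distrib_left mult_ac)
  finally show ?thesis .
qed

lemma hessian_part:
  fixes \<mu> :: "real^'n::finite \<Rightarrow> real" and \<beta> :: real
  assumes beta: "1 < \<beta>" "\<beta> \<le> 2"
    and smooth: "smooth_on (- {0}) \<mu>"
    and homog: "\<And>t \<xi>. t > 0 \<Longrightarrow> \<xi> \<noteq> 0 \<Longrightarrow> \<mu> (t *\<^sub>R \<xi>) = t powr \<beta> * \<mu> \<xi>"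
    and nonzero: "\<And>\<xi>. \<xi> \<noteq> 0 \<Longrightarrow> \<mu> \<xi> \<noteq> 0"
  shows "\<exists>\<kappa>0. norm \<kappa>0 = 1 \<and> (\<exists>\<sigma>. \<bar>\<sigma>\<bar> = 1 \<and> (\<forall>v. v \<noteq> 0 \<longrightarrow> \<sigma> * (v \<bullet> (hessian \<mu> \<kappa>0 *v v)) > 0))"
proof -
  have U: "open (- {0::real^'n})" by auto
  have cont: "continuous_on (- {0}) \<mu>" using smooth_cont[OF smooth U, of "[]"] by simp
  have "\<exists>\<kappa>\<in>sphere (0::real^'n) 1. \<forall>y\<in>sphere 0 1. \<bar>\<mu> \<kappa>\<bar> \<le> \<bar>\<mu> y\<bar>"
  proof (rule continuous_attains_inf)
    have "axis (undefined::'n) (1::real) \<in> sphere 0 1" by simp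
    then show "sphere (0::real^'n) 1 \<noteq> {}" by blast
    show "continuous_on (sphere 0 1) (\<lambda>\<xi>. \<bar>\<mu> \<xi>\<bar>)"
      by (intro continuous_intros continuous_on_subset[OF cont]) auto
  qed auto
  then obtain \<kappa> where \<kappa>: "norm \<kappa> = 1" and kmin: "\<And>y. norm y = 1 \<Longrightarrow> \<bar>\<mu> \<kappa>\<bar> \<le> \<bar>\<mu> y\<bar>" by auto
  have k0: "\<kappa> \<noteq> 0" using \<kappa> by auto
  define m where "m = \<bar>\<mu> \<kappa>\<bar>"
  have m0: "m > 0" using nonzero[OF k0] by (simp add: m_def)
  define \<sigma> where "\<sigma> = (if \<mu> \<kappa> > 0 then 1 else -1 :: real)"
  have s1: "\<bar>\<sigma>\<bar> = 1" by (simp add: \<sigma>_def)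
  have sk: "\<sigma> * \<mu> \<kappa> = m" using nonzero[OF k0] by (auto simp: \<sigma>_def m_def)
  have lower: "\<bar>\<mu> \<xi>\<bar> \<ge> m * norm \<xi> powr \<beta>" if "\<xi> \<noteq> 0" for \<xi>
  proof -
    let ?w = "\<xi> /\<^sub>R norm \<xi>"
    have w: "norm ?w = 1" "?w \<noteq> 0" using that by auto
    have "\<mu> \<xi> = \<mu> (norm \<xi> *\<^sub>R ?w)" using that by simp
    also have "\<dots> = norm \<xi> powr \<beta> * \<mu> ?w" using homog[of "norm \<xi>" ?w] that w by simp
    finally have "\<bar>\<mu> \<xi>\<bar> = norm \<xi> powr \<beta> * \<bar>\<mu> ?w\<bar>" by (simp add: abs_mult)
    moreover have "m \<le> \<bar>\<mu> ?w\<bar>" using kmin[OF w(1)] by (simp add: m_def)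
    moreover have "0 \<le> norm \<xi> powr \<beta>" by simp
    ultimately show ?thesis by (metis mult.commute mult_left_mono)
  qed
  define V where "V = (- {0}) \<inter> (\<lambda>\<xi>. \<sigma> * \<mu> \<xi>) -` {0<..}"
  have "open V" unfolding V_def
    by (rule continuous_open_preimage) (auto intro!: continuous_intros cont)
  moreover have "\<kappa> \<in> V" using sk m0 k0 by (simp add: V_def)
  ultimately obtain \<delta>0 where \<delta>0: "\<delta>0 > 0" "ball \<kappa> \<delta>0 \<subseteq> V" using open_contains_ball by blast
  have inV: "\<xi> \<in> V \<Longrightarrow> \<xi> \<noteq> 0 \<and> \<sigma> * \<mu> \<xi> \<ge> m * norm \<xi> powr \<beta>" for \<xi>
  proof -
    assume "\<xi> \<in> V"
    then have z: "\<xi> \<noteq> 0" and p: "\<sigma> * \<mu> \<xi> > 0" by (auto simp: V_def)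
    have "\<sigma> * \<mu> \<xi> = \<bar>\<mu> \<xi>\<bar>" using p by (auto simp: \<sigma>_def split: if_splits)
    then show ?thesis using lower[OF z] z by simp
  qed
  have main: "\<sigma> * (v \<bullet> (hessian \<mu> \<kappa> *v v)) > 0" if v: "v \<noteq> 0" for v
  proof -
    define a where "a = \<kappa> \<bullet> v"
    define b where "b = v \<bullet> v"
    define q where "q = (\<lambda>t::real. 1 + 2 * t * a + t^2 * b)"
    define q' where "q' = (\<lambda>t::real. 2 * a + 2 * t * b)"
    have nv: "norm v > 0" using v by simp
    define \<delta> where "\<delta> = \<delta>0 / norm v"
    have \<delta>: "\<delta> > 0" using \<delta>0 nv by (simp add: \<delta>_def)
    have inball: "\<kappa> + t *\<^sub>R v \<in> V" if "\<bar>t\<bar> < \<delta>" for t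
    proof -
      have "norm (t *\<^sub>R v) < \<delta>0" using that nv by (simp add: \<delta>_def pos_less_divide_eq)
      then have "\<kappa> + t *\<^sub>R v \<in> ball \<kappa> \<delta>0" by (simp add: dist_norm)
      then show ?thesis using \<delta>0 by blast
    qed
    have kk: "\<kappa> \<bullet> \<kappa> = 1" using \<kappa> power2_norm_eq_inner[of \<kappa>] by simp
    have qn: "q t = (norm (\<kappa> + t *\<^sub>R v))^2" for t
    proof -
      have "(norm (\<kappa> + t *\<^sub>R v))^2 = (\<kappa> + t *\<^sub>R v) \<bullet> (\<kappa> + t *\<^sub>R v)" by (rule power2_norm_eq_inner)
      also have "\<dots> = \<kappa> \<bullet> \<kappa> + 2 * t * (\<kappa> \<bullet> v) + t^2 * (v \<bullet> v)"
        by (simp add: inner_add_left inner_add_right inner_commute algebra_simps power2_eq_square)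
      finally show ?thesis by (simp add: q_def a_def b_def kk)
    qed
    have npow: "norm (\<kappa> + t *\<^sub>R v) powr \<beta> = q t powr (\<beta>/2)" for t
      by (simp add: qn sq_powr_half)
    have qpos: "q t > 0" if "\<bar>t\<bar> < \<delta>" for t
      using inV[OF inball[OF that]] by (simp add: qn)
    define h where "h t = \<sigma> * \<mu> (\<kappa> + t *\<^sub>R v) - m * q t powr (\<beta>/2)" for t
    define h' where "h' t = \<sigma> * (\<Sum>i\<in>UNIV. v$i * dpart i \<mu> (\<kappa> + t *\<^sub>R v))
        - m * (\<beta>/2 * (q t powr (\<beta>/2 - 1) * q' t))" for t
    have h0: "h 0 = 0" using sk by (simp add: h_def q_def)
    have hmin: "h 0 \<le> h t" if "\<bar>t\<bar> < \<delta>" for t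
    proof -
      have "0 \<le> h t" using inV[OF inball[OF that]] by (simp add: h_def npow)
      then show ?thesis by (simp add: h0)
    qed
    have D1: "DERIV h t :> h' t" if t: "\<bar>t\<bar> < \<delta>" for t
    proof -
      have d: "\<mu> differentiable (at (\<kappa> + t *\<^sub>R v))"
        using smooth inV[OF inball[OF t]] unfolding smooth_on_def by (metis ComplI dlist.simps(1) singletonD)
      have P: "DERIV (\<lambda>t. q t powr (\<beta>/2)) t :> \<beta>/2 * (q t powr (\<beta>/2 - 1) * q' t)"
        using powr_deriv2(1)[of t a b \<beta>] qpos[OF t] by (simp add: q_def q'_def)
      show ?thesis unfolding h_def h'_def
        by (intro DERIV_diff DERIV_cmult line_deriv_real[OF d] P)
    qed
    have D2: "DERIV h' 0 :> \<sigma> * (\<Sum>i\<in>UNIV. v$i * (\<Sum>j\<in>UNIV. v$j * dpart j (dpart i \<mu>) \<kappa>))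
         - m * (\<beta> * (\<beta> - 2) * a^2 + \<beta> * b)"
    proof -
      have "DERIV (\<lambda>t. dpart i \<mu> (\<kappa> + t *\<^sub>R v)) 0 :> (\<Sum>j\<in>UNIV. v$j * dpart j (dpart i \<mu>) \<kappa>)" for i
      proof -
        have "dlist [i] \<mu> differentiable (at (\<kappa> + 0 *\<^sub>R v))"
          using smooth k0 unfolding smooth_on_def by (metis ComplI add_0_right scaleR_zero_left singletonD)
        from line_deriv_real[OF this] show ?thesis by simp
      qed
      moreover have P: "DERIV (\<lambda>t. \<beta>/2 * (q t powr (\<beta>/2 - 1) * q' t)) 0 :> \<beta> * (\<beta> - 2) * a^2 + \<beta> * b"
        using powr_deriv2(2)[of \<beta> a b] by (simp add: q_def q'_def)
      ultimately show ?thesis unfolding h'_def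
        by (intro DERIV_diff DERIV_cmult DERIV_sum) auto
    qed
    have c: "\<sigma> * (\<Sum>i\<in>UNIV. v$i * (\<Sum>j\<in>UNIV. v$j * dpart j (dpart i \<mu>) \<kappa>)) - m * (\<beta> * (\<beta> - 2) * a^2 + \<beta> * b) \<ge> 0"
      by (rule second_deriv_nonneg[OF \<delta> hmin D1 D2])
    have S: "(\<Sum>i\<in>UNIV. v$i * (\<Sum>j\<in>UNIV. v$j * dpart j (dpart i \<mu>) \<kappa>)) = v \<bullet> (hessian \<mu> \<kappa> *v v)"
      by (simp add: quad_form_eq hessian_def)
    have ab: "a^2 \<le> b"
    proof -
      have "\<bar>a\<bar> \<le> norm \<kappa> * norm v" unfolding a_def by (rule Cauchy_Schwarz_ineq2)
      then have "a^2 \<le> (norm v)^2" using \<kappa> by (metis abs_ge_zero mult_1 power2_abs power_mono)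
      then show ?thesis by (simp add: b_def power2_norm_eq_inner)
    qed
    have b0: "b > 0" using v by (simp add: b_def)
    have "\<beta> * (\<beta> - 2) * a^2 \<ge> \<beta> * (\<beta> - 2) * b"
      using ab beta by (intro mult_left_mono_neg) (auto intro: mult_nonneg_nonpos)
    then have "\<beta> * (\<beta> - 2) * a^2 + \<beta> * b \<ge> \<beta> * (\<beta> - 1) * b" by (simp add: algebra_simps)
    moreover have "\<beta> * (\<beta> - 1) * b > 0" using beta b0 by simp
    ultimately have "m * (\<beta> * (\<beta> - 2) * a^2 + \<beta> * b) > 0" using m0 by simp
    then show ?thesis using c S by simp
  qed
  show ?thesis using \<kappa> s1 main by blast
qed

lemma det_from_definite:
  fixes H :: "real^'n::finite^'n"
  assumes "\<And>v. v \<noteq> 0 \<Longrightarrow> \<sigma> * (v \<bullet> (H *v v)) > 0"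
  shows "det H \<noteq> 0"
proof -
  have "inj (\<lambda>x. H *v x)"
  proof (rule injI, rule ccontr)
    fix x y assume e: "H *v x = H *v y" and ne: "x \<noteq> y"
    have "H *v (x - y) = 0" using e by (simp add: matrix_vector_mult_diff_distrib)
    then show False using assms[of "x - y"] ne by simp
  qed
  then show ?thesis using det_nz_iff_inj[of "\<lambda>x. H *v x"] by simp
qed

theorem mainTheorem6:
  fixes \<mu> :: "real^'n::finite \<Rightarrow> real"
    and \<beta> :: real
    and \<rho>0 :: "real^'n \<Rightarrow> real"
    and \<phi> :: "real^'n \<Rightarrow> complex"
  assumes beta: "1 < \<beta>" "\<beta> \<le> 2"
    and smooth: "smooth_on (- {0}) \<mu>"
    and homog: "\<And>t \<xi>. t > 0 \<Longrightarrow> \<xi> \<noteq> 0 \<Longrightarrow> \<mu> (t *\<^sub>R \<xi>) = t powr \<beta> * \<mu> \<xi>"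
    and nonzero: "\<And>\<xi>. \<xi> \<noteq> 0 \<Longrightarrow> \<mu> \<xi> \<noteq> 0"
    and rho_smooth: "smooth_on UNIV \<rho>0"
    and rho_supp: "closure {x. \<rho>0 x \<noteq> 0} \<subseteq> ball 0 (1/2)"
    and rho_one: "\<And>x. x \<in> ball 0 (1/4) \<Longrightarrow> \<rho>0 x = 1"
    and window: "schwartz \<phi>" "\<phi> \<noteq> (\<lambda>_. 0)"
  shows "(\<forall>p q :: ereal. 0 < p \<longrightarrow> 0 < q \<longrightarrow>
            (\<exists>\<epsilon>>0. \<forall>i j.
               in_W_inf_inf \<phi> (real CARD('n) / dotmin p q + \<epsilon>)
                 (\<lambda>x. complex_of_real ((1 - \<rho>0 x) * dlist [i, j] \<mu> x))))
       \<and> (\<exists>\<kappa>0. norm \<kappa>0 = 1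
            \<and> det (hessian \<mu> \<kappa>0) \<noteq> 0
            \<and> ((\<forall>v. v \<noteq> 0 \<longrightarrow> v \<bullet> (hessian \<mu> \<kappa>0 *v v) > 0)
               \<or> (\<forall>v. v \<noteq> 0 \<longrightarrow> v \<bullet> (hessian \<mu> \<kappa>0 *v v) < 0))
            \<and> (\<exists>r0>0. \<forall>t\<ge>1. \<forall>\<xi>. \<xi> \<in> ball \<kappa>0 r0 \<and> norm \<xi> = 1 \<longrightarrow>
                  \<mu> (t *\<^sub>R \<xi>) = t powr \<beta> * \<mu> \<xi>))"
proof (intro conjI)
  show "\<forall>p q :: ereal. 0 < p \<longrightarrow> 0 < q \<longrightarrow>
            (\<exists>\<epsilon>>0. \<forall>i j.
               in_W_inf_inf \<phi> (real CARD('n) / dotmin p q + \<epsilon>)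
                 (\<lambda>x. complex_of_real ((1 - \<rho>0 x) * dlist [i, j] \<mu> x)))"
  proof (intro allI impI exI[of _ 1] conjI)
    fix p q :: ereal and i j :: 'n
    show "in_W_inf_inf \<phi> (real CARD('n) / dotmin p q + 1) (\<lambda>x. complex_of_real ((1 - \<rho>0 x) * dlist [i, j] \<mu> x))"
      by (rule in_W_main[OF f_props(1)[OF smooth homog beta(2) rho_smooth rho_supp rho_one]
                            f_props(2)[OF smooth homog beta(2) rho_smooth rho_supp rho_one] window(1)])
  qed simp
next
  obtain \<kappa> \<sigma> where \<kappa>: "norm \<kappa> = 1" and s: "\<bar>\<sigma>\<bar> = 1"
    and pos: "\<And>v. v \<noteq> 0 \<Longrightarrow> \<sigma> * (v \<bullet> (hessian \<mu> \<kappa> *v v)) > 0"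
    using hessian_part[OF beta smooth homog nonzero] by blast
  have det: "det (hessian \<mu> \<kappa>) \<noteq> 0" by (rule det_from_definite[OF pos])
  have def: "(\<forall>v. v \<noteq> 0 \<longrightarrow> v \<bullet> (hessian \<mu> \<kappa> *v v) > 0)
               \<or> (\<forall>v. v \<noteq> 0 \<longrightarrow> v \<bullet> (hessian \<mu> \<kappa> *v v) < 0)"
  proof (cases "\<sigma> = 1")
    case True then show ?thesis using pos by auto
  next
    case False
    then have "\<sigma> = -1" using s by auto
    then show ?thesis using pos by fastforce
  qed
  have hom: "\<forall>t\<ge>1. \<forall>\<xi>. \<xi> \<in> ball \<kappa> 1 \<and> norm \<xi> = 1 \<longrightarrow> \<mu> (t *\<^sub>R \<xi>) = t powr \<beta> * \<mu> \<xi>"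
  proof (intro allI impI)
    fix t :: real and \<xi> :: "real^'n" assume "1 \<le> t" "\<xi> \<in> ball \<kappa> 1 \<and> norm \<xi> = 1"
    then have "0 < t" "\<xi> \<noteq> 0" by auto
    then show "\<mu> (t *\<^sub>R \<xi>) = t powr \<beta> * \<mu> \<xi>" by (rule homog)
  qed
  show "\<exists>\<kappa>0. norm \<kappa>0 = 1
            \<and> det (hessian \<mu> \<kappa>0) \<noteq> 0
            \<and> ((\<forall>v. v \<noteq> 0 \<longrightarrow> v \<bullet> (hessian \<mu> \<kappa>0 *v v) > 0)
               \<or> (\<forall>v. v \<noteq> 0 \<longrightarrow> v \<bullet> (hessian \<mu> \<kappa>0 *v v) < 0))
            \<and> (\<exists>r0>0. \<forall>t\<ge>1. \<forall>\<xi>. \<xi> \<in> ball \<kappa>0 r0 \<and> norm \<xi> = 1 \<longrightarrow>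
                  \<mu> (t *\<^sub>R \<xi>) = t powr \<beta> * \<mu> \<xi>)"
  proof (intro exI[of _ \<kappa>] conjI)
    show "\<exists>r0>0. \<forall>t\<ge>1. \<forall>\<xi>. \<xi> \<in> ball \<kappa> r0 \<and> norm \<xi> = 1 \<longrightarrow> \<mu> (t *\<^sub>R \<xi>) = t powr \<beta> * \<mu> \<xi>"
      using hom by (intro exI[of _ 1]) simp
  qed (use \<kappa> det def in auto)
qed

end
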